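(* Let $\mathbf{C}$ be a category of $\mathbf{FI}$ type. If $M_\bullet$ is a free $\mathbf{C}$-module over $\mathbb{C}$, then there exists a character polynomial $P$ on $\mathbf{C}$ whose restriction to $G_c$ coincides with the character of the $G_c$-representation $M_c$ for every object $c$. Conversely, the character polynomials arising in this way span the space of all character polynomials on $\mathbf{C}$. More precisely, for every object $d$, the character polynomials of degree $\leq d$ are exactly the characters of virtual free $\mathbf{C}$-modules of degree $\leq d$.
   Context: A category $\mathbf{C}$ is of $\mathbf{FI}$ type if: (1) all Hom-sets are finite; (2) every morphism is a monomorphism and every endomorphism is an isomorphism; (3) for all objects $c,d$ the group $G_d=\mathrm{Aut}_{\mathbf{C}}(d)$ acts transitively (by postcomposition) on $\mathrm{Hom}_{\mathbf{C}}(c,d)$; (4) for every object $d$ there are only finitely many isomorphism classes of objects $c$ with $\mathrm{Hom}_{\mathbf{C}}(c,d)\neq\emptyset$; (5) every pair of morphisms $c_1\to d\leftarrow c_2$ has a pullback, and every pair of morphisms $f_i:p\to c_i$ ($i=1,2$) has a weak push-out. A weak push-out of $f_1,f_2$ is a commutative square given by $g_i:c_i\to d$ with $g_1f_1=g_2f_2$ which is a pullback square, such that for every other pullback square $h_i:c_i\to z$ with $h_1f_1=h_2f_2$ there is a unique $h:d\to z$ with $hg_i=h_i$. Write $c\leq d$ if $\mathrm{Hom}_{\mathbf{C}}(c,d)\neq\emptyset$, and $G_c=\mathrm{Aut}_{\mathbf{C}}(c)$. A $\mathbf{C}$-module is a functor from $\mathbf{C}$ to complex vector spaces; $M_c$ is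 a $G_c$-representation. For an object $c$ and a finite-dimensional $G_c$-representation $V$, $\mathrm{Ind}_c(V)$ is the $\mathbf{C}$-module $d\mapsto \mathbb{C}[\mathrm{Hom}_{\mathbf{C}}(c,d)]\otimes_{\mathbb{C}[G_c]}V$ (with $G_c$ acting on the right by precomposition, and morphisms acting by postcomposition). A free $\mathbf{C}$-module is a finite direct sum of such induction modules; it has degree $\leq d$ if every $\mathrm{Ind}_c(V)$ appearing nontrivially has $c\leq d$. A virtual free $\mathbf{C}$-module is a formal $\mathbb{C}$-linear combination of induction modules (with $\mathrm{Ind}_c$ extended linearly to virtual representations), with degree defined in the same way. The character of a $\mathbf{C}$-module assigns to each $G_c$ the character of $M_c$. Binomial set: $\binom{d}{c}=\mathrm{Hom}_{\mathbf{C}}(c,d)/G_c$, with classes $[f]$. For a conjugacy class $\mu\subseteq G_c$ (write $|\mu|=c$), the class function $\binom{X}{\mu}$ is defined on every $G_d$ by $\binom{X}{\mu}(\sigma)=\#\{[f]\in\binom{d}{c} : \exists\psi\in\mu,\ \sigma\circ f=f\circ\psi\}$, of degree $|\mu|$. A character polynomial is a $\mathbb{C}$-linear combination of such functions; it has degree $\leq d$ if every $\binom{X}{\mu}$ appearing nontrivially has $|\mu|\leq d$. *)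

theory Defs
  imports Complex_Main "HOL-Library.Function_Algebras"
begin

text \<open>A category is given by a set of objects, Hom-sets, composition
  (cmp g f means g after f) and identities.\<close>

record ('o, 'm) cat =
  Obj :: "'o set"
  Hom :: "'o \<Rightarrow> 'o \<Rightarrow> 'm set"
  cmp :: "'m \<Rightarrow> 'm \<Rightarrow> 'm"
  idm :: "'o \<Rightarrow> 'm"

definition is_category :: "('o, 'm) cat \<Rightarrow> bool" where
  "is_category C \<longleftrightarrow>
     (\<forall>a b. Hom C a b \<noteq> {} \<longrightarrow> a \<in> Obj C \<and> b \<in> Obj C) \<and>
     (\<forall>a b a' b' f. f \<in> Hom C a b \<and> f \<in> Hom C a' b' \<longrightarrow> a = a' \<and> b = b') \<and>
     (\<forall>a\<in>Obj C. idm C a \<in> Hom C a a) \<and>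
     (\<forall>a b c f g. f \<in> Hom C a b \<longrightarrow> g \<in> Hom C b c \<longrightarrow> cmp C g f \<in> Hom C a c) \<and>
     (\<forall>a b c d f g h. f \<in> Hom C a b \<longrightarrow> g \<in> Hom C b c \<longrightarrow> h \<in> Hom C c d \<longrightarrow>
        cmp C h (cmp C g f) = cmp C (cmp C h g) f) \<and>
     (\<forall>a b f. f \<in> Hom C a b \<longrightarrow> cmp C (idm C b) f = f \<and> cmp C f (idm C a) = f)"

definition Aut :: "('o, 'm) cat \<Rightarrow> 'o \<Rightarrow> 'm set" where
  "Aut C c = {f \<in> Hom C c c. \<exists>g\<in>Hom C c c. cmp C g f = idm C c \<and> cmp C f g = idm C c}"

definition isomorphic :: "('o, 'm) cat \<Rightarrow> 'o \<Rightarrow> 'o \<Rightarrow> bool" where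
  "isomorphic C c c' \<longleftrightarrow>
     (\<exists>f\<in>Hom C c c'. \<exists>g\<in>Hom C c' c. cmp C g f = idm C c \<and> cmp C f g = idm C c')"

definition iso_class :: "('o, 'm) cat \<Rightarrow> 'o \<Rightarrow> 'o set" where
  "iso_class C c = {c' \<in> Obj C. isomorphic C c c'}"

definition obj_le :: "('o, 'm) cat \<Rightarrow> 'o \<Rightarrow> 'o \<Rightarrow> bool" where
  "obj_le C c d \<longleftrightarrow> Hom C c d \<noteq> {}"

definition is_pullback ::
  "('o, 'm) cat \<Rightarrow> 'o \<Rightarrow> 'o \<Rightarrow> 'o \<Rightarrow> 'o \<Rightarrow> 'm \<Rightarrow> 'm \<Rightarrow> 'm \<Rightarrow> 'm \<Rightarrow> bool" where
  "is_pullback C p c1 c2 d f1 f2 g1 g2 \<longleftrightarrow>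
     f1 \<in> Hom C p c1 \<and> f2 \<in> Hom C p c2 \<and> g1 \<in> Hom C c1 d \<and> g2 \<in> Hom C c2 d \<and>
     cmp C g1 f1 = cmp C g2 f2 \<and>
     (\<forall>z h1 h2. h1 \<in> Hom C z c1 \<longrightarrow> h2 \<in> Hom C z c2 \<longrightarrow> cmp C g1 h1 = cmp C g2 h2 \<longrightarrow>
        (\<exists>!h. h \<in> Hom C z p \<and> cmp C f1 h = h1 \<and> cmp C f2 h = h2))"

definition FI_type :: "('o, 'm) cat \<Rightarrow> bool" where
  "FI_type C \<longleftrightarrow> is_category C \<and>
     \<comment> \<open>(1) finite Hom-sets\<close>
     (\<forall>a b. finite (Hom C a b)) \<and>
     \<comment> \<open>(2) monomorphisms; endomorphisms are isomorphisms\<close>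
     (\<forall>a b e f g h. f \<in> Hom C a b \<longrightarrow> g \<in> Hom C e a \<longrightarrow> h \<in> Hom C e a \<longrightarrow>
         cmp C f g = cmp C f h \<longrightarrow> g = h) \<and>
     (\<forall>c f. f \<in> Hom C c c \<longrightarrow> f \<in> Aut C c) \<and>
     \<comment> \<open>(3) transitivity of the postcomposition action\<close>
     (\<forall>c d f f'. f \<in> Hom C c d \<longrightarrow> f' \<in> Hom C c d \<longrightarrow> (\<exists>\<sigma>\<in>Aut C d. cmp C \<sigma> f = f')) \<and>
     \<comment> \<open>(4) finitely many iso classes below each object\<close>
     (\<forall>d\<in>Obj C. finite (iso_class C ` {c \<in> Obj C. Hom C c d \<noteq> {}})) \<and>
     \<comment> \<open>(5a) pullbacks\<close>
     (\<forall>c1 c2 d g1 g2. g1 \<in> Hom C c1 d \<longrightarrow> g2 \<in> Hom C c2 d \<longrightarrow>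
         (\<exists>p f1 f2. is_pullback C p c1 c2 d f1 f2 g1 g2)) \<and>
     \<comment> \<open>(5b) weak push-outs\<close>
     (\<forall>p c1 c2 f1 f2. f1 \<in> Hom C p c1 \<longrightarrow> f2 \<in> Hom C p c2 \<longrightarrow>
         (\<exists>d g1 g2. is_pullback C p c1 c2 d f1 f2 g1 g2 \<and>
            (\<forall>z h1 h2. is_pullback C p c1 c2 z f1 f2 h1 h2 \<longrightarrow>
               (\<exists>!h. h \<in> Hom C d z \<and> cmp C h g1 = h1 \<and> cmp C h g2 = h2))))"

definition conj_class :: "('o, 'm) cat \<Rightarrow> 'o \<Rightarrow> 'm set \<Rightarrow> bool" where
  "conj_class C c \<mu> \<longleftrightarrow>
     (\<exists>\<sigma>\<in>Aut C c. \<mu> = {\<psi> \<in> Aut C c. \<exists>\<tau>\<in>Aut C c. cmp C \<psi> \<tau> = cmp C \<tau> \<sigma>})"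

definition orbit_cls :: "('o, 'm) cat \<Rightarrow> 'o \<Rightarrow> 'm \<Rightarrow> 'm set" where
  "orbit_cls C c f = {cmp C f g | g. g \<in> Aut C c}"

definition binomX :: "('o, 'm) cat \<Rightarrow> 'o \<Rightarrow> 'm set \<Rightarrow> 'o \<Rightarrow> 'm \<Rightarrow> nat" where
  "binomX C c \<mu> d \<sigma> =
     card {orbit_cls C c f | f. f \<in> Hom C c d \<and> (\<exists>\<psi>\<in>\<mu>. cmp C \<sigma> f = cmp C f \<psi>)}"

text \<open>A character polynomial is a formal finite linear combination
  \<open>\<Sum> a_i binom X \<mu>_i\<close>, given as a list of triples (coefficient, object c, class in G_c).\<close>
type_synonym ('o, 'm) charpoly = "(complex \<times> 'o \<times> 'm set) list"

definition char_poly :: "('o, 'm) cat \<Rightarrow> ('o, 'm) charpoly \<Rightarrow> bool" where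
  "char_poly C P \<longleftrightarrow> (\<forall>(a, c, \<mu>) \<in> set P. c \<in> Obj C \<and> conj_class C c \<mu>)"

definition cp_deg_le :: "('o, 'm) cat \<Rightarrow> ('o, 'm) charpoly \<Rightarrow> 'o \<Rightarrow> bool" where
  "cp_deg_le C P d \<longleftrightarrow> (\<forall>(a, c, \<mu>) \<in> set P. obj_le C c d)"

text \<open>The class function defined by a character polynomial (on all groups \<open>G_e\<close>;
  set to 0 outside).\<close>
definition cp_fun :: "('o, 'm) cat \<Rightarrow> ('o, 'm) charpoly \<Rightarrow> 'o \<Rightarrow> 'm \<Rightarrow> complex" where
  "cp_fun C P e \<sigma> =
     (if e \<in> Obj C \<and> \<sigma> \<in> Aut C e
      then (\<Sum>(a, c, \<mu>) \<leftarrow> P. a * of_nat (binomX C c \<mu> e \<sigma>)) else 0)"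

definition cscale :: "complex \<Rightarrow> ('x \<Rightarrow> complex) \<Rightarrow> ('x \<Rightarrow> complex)" where
  "cscale a u = (\<lambda>x. a * u x)"

definition delta :: "'x \<Rightarrow> 'x \<Rightarrow> complex" where
  "delta x = (\<lambda>y. if y = x then 1 else 0)"

text \<open>Trace of the map induced by a linear endomorphism \<open>T\<close> of \<open>U\<close>
  (with \<open>T K \<subseteq> K\<close>) on the quotient \<open>U/K\<close>: choose a basis \<open>C\<close> of \<open>K\<close>
  and extend by \<open>B\<close> to a basis of \<open>U\<close>; the classes of \<open>B\<close> form a basis of \<open>U/K\<close>,
  and the trace is the sum of the diagonal coefficients.\<close>
definition quot_trace ::
  "('x \<Rightarrow> complex) set \<Rightarrow> ('x \<Rightarrow> complex) set \<Rightarrow> (('x \<Rightarrow> complex) \<Rightarrow> ('x \<Rightarrow> complex)) \<Rightarrow> complex" where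
  "quot_trace U K T =
     (let (B, Cb) = (SOME (B, Cb). Cb \<subseteq> K \<and> \<not> module.dependent cscale Cb \<and> module.span cscale Cb = K \<and>
                                B \<subseteq> U \<and> B \<inter> Cb = {} \<and> \<not> module.dependent cscale (B \<union> Cb) \<and>
                                module.span cscale (B \<union> Cb) = U)
      in \<Sum>b\<in>B. module.representation cscale (B \<union> Cb) (T b) b)"

text \<open>A finite-dimensional representation of \<open>G_c\<close>, realised on \<open>\<complex>^n\<close>
  by matrices \<open>\<rho> g\<close> (entries \<open>\<rho> g i j\<close>, \<open>i, j < n\<close>).\<close>
definition is_rep :: "('o, 'm) cat \<Rightarrow> 'o \<Rightarrow> nat \<Rightarrow> ('m \<Rightarrow> nat \<Rightarrow> nat \<Rightarrow> complex) \<Rightarrow> bool" where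
  "is_rep C c n \<rho> \<longleftrightarrow>
     (\<forall>i<n. \<forall>j<n. \<rho> (idm C c) i j = (if i = j then 1 else 0)) \<and>
     (\<forall>g\<in>Aut C c. \<forall>h\<in>Aut C c. \<forall>i<n. \<forall>j<n.
        \<rho> (cmp C g h) i j = (\<Sum>k<n. \<rho> g i k * \<rho> h k j))"

text \<open>A free module is a finite direct sum \<open>\<Oplus>_i Ind_{c_i}(V_i)\<close>, given by the list of
  triples \<open>(c_i, n_i, \<rho>_i)\<close>.\<close>
type_synonym ('o, 'm) freemod = "('o \<times> nat \<times> ('m \<Rightarrow> nat \<Rightarrow> nat \<Rightarrow> complex)) list"

definition free_module :: "('o, 'm) cat \<Rightarrow> ('o, 'm) freemod \<Rightarrow> bool" where
  "free_module C L \<longleftrightarrow> (\<forall>(c, n, \<rho>) \<in> set L. c \<in> Obj C \<and> is_rep C c n \<rho>)"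

text \<open>Coordinates of \<open>\<Oplus>_i \<complex>[Hom(c_i,e)] \<otimes>_\<complex> V_i\<close>: triples \<open>(i, f, k)\<close>
  standing for \<open>f \<otimes> e_k\<close> in the \<open>i\<close>-th summand.\<close>
definition fm_coords :: "('o, 'm) cat \<Rightarrow> ('o, 'm) freemod \<Rightarrow> 'o \<Rightarrow> (nat \<times> 'm \<times> nat) set" where
  "fm_coords C L e =
     {(i, f, k). i < length L \<and> f \<in> Hom C (fst (L ! i)) e \<and> k < fst (snd (L ! i))}"

definition fm_space :: "('o, 'm) cat \<Rightarrow> ('o, 'm) freemod \<Rightarrow> 'o \<Rightarrow> (nat \<times> 'm \<times> nat \<Rightarrow> complex) set" where
  "fm_space C L e = {u. \<forall>x. u x \<noteq> 0 \<longrightarrow> x \<in> fm_coords C L e}"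

text \<open>Relations \<open>(f g) \<otimes> v - f \<otimes> (g v)\<close> defining the tensor product over \<open>\<complex>[G_c]\<close>.\<close>
definition fm_relations :: "('o, 'm) cat \<Rightarrow> ('o, 'm) freemod \<Rightarrow> 'o \<Rightarrow> (nat \<times> 'm \<times> nat \<Rightarrow> complex) set" where
  "fm_relations C L e =
     module.span cscale
       {delta (i, cmp C f g, k) - (\<Sum>j < fst (snd (L ! i)). cscale (snd (snd (L ! i)) g j k) (delta (i, f, j)))
        | i f g k. i < length L \<and> f \<in> Hom C (fst (L ! i)) e \<and> g \<in> Aut C (fst (L ! i)) \<and>
                   k < fst (snd (L ! i))}"

definition fm_act :: "('o, 'm) cat \<Rightarrow> ('o, 'm) freemod \<Rightarrow> 'o \<Rightarrow> 'm \<Rightarrow>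
    (nat \<times> 'm \<times> nat \<Rightarrow> complex) \<Rightarrow> (nat \<times> 'm \<times> nat \<Rightarrow> complex)" where
  "fm_act C L e \<sigma> u = (\<Sum>(i, f, k) \<in> fm_coords C L e. cscale (u (i, f, k)) (delta (i, cmp C \<sigma> f, k)))"

text \<open>Character of the free module at \<open>\<sigma> \<in> G_e\<close> (0 outside).\<close>
definition chi_free :: "('o, 'm) cat \<Rightarrow> ('o, 'm) freemod \<Rightarrow> 'o \<Rightarrow> 'm \<Rightarrow> complex" where
  "chi_free C L e \<sigma> =
     (if e \<in> Obj C \<and> \<sigma> \<in> Aut C e
      then quot_trace (fm_space C L e) (fm_relations C L e) (fm_act C L e \<sigma>) else 0)"

text \<open>A virtual free module: formal complex linear combination \<open>\<Sum> a_j Ind_{c_j}(V_j)\<close>.\<close>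
type_synonym ('o, 'm) virtmod = "(complex \<times> 'o \<times> nat \<times> ('m \<Rightarrow> nat \<Rightarrow> nat \<Rightarrow> complex)) list"

definition virtual_free :: "('o, 'm) cat \<Rightarrow> ('o, 'm) virtmod \<Rightarrow> bool" where
  "virtual_free C V \<longleftrightarrow> (\<forall>(a, c, n, \<rho>) \<in> set V. c \<in> Obj C \<and> is_rep C c n \<rho>)"

definition vf_deg_le :: "('o, 'm) cat \<Rightarrow> ('o, 'm) virtmod \<Rightarrow> 'o \<Rightarrow> bool" where
  "vf_deg_le C V d \<longleftrightarrow> (\<forall>(a, c, n, \<rho>) \<in> set V. obj_le C c d)"

definition chi_virtual :: "('o, 'm) cat \<Rightarrow> ('o, 'm) virtmod \<Rightarrow> 'o \<Rightarrow> 'm \<Rightarrow> complex" where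
  "chi_virtual C V e \<sigma> = (\<Sum>(a, c, n, \<rho>) \<leftarrow> V. a * chi_free C [(c, n, \<rho>)] e \<sigma>)"

end

theory Submission
  imports Defs "HOL-Algebra.Multiplicative_Group"
begin

lemma cscale_vs: "vector_space cscale"
  by unfold_locales (auto simp: cscale_def fun_eq_iff algebra_simps)

interpretation cs: vector_space cscale by (rule cscale_vs)

lemma cscale_apply[simp]: "cscale a u x = a * u x" by (simp add: cscale_def)

lemma add_sum_hom:
  assumes "\<And>u v. f (u + v) = f u + f v" "f 0 = 0"
  shows "f (sum g S) = (\<Sum>a\<in>S. f (g a))"
  by (induct S rule: infinite_finite_induct) (auto simp: assms)

lemma quot_trace_eq:
  fixes U K :: "('x \<Rightarrow> complex) set" and T :: "('x \<Rightarrow> complex) \<Rightarrow> ('x \<Rightarrow> complex)"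
    and \<psi> :: "'r \<Rightarrow> ('x \<Rightarrow> complex) \<Rightarrow> complex" and vec :: "'r \<Rightarrow> ('x \<Rightarrow> complex)"
  assumes subU: "cs.subspace U" and subK: "cs.subspace K" and KU: "K \<subseteq> U"
    and D: "finite D" "U \<subseteq> cs.span D"
    and TU: "\<And>u. u \<in> U \<Longrightarrow> T u \<in> U" and TK: "\<And>k. k \<in> K \<Longrightarrow> T k \<in> K"
    and Tadd: "\<And>u v. T (u + v) = T u + T v" and Tscale: "\<And>a u. T (cscale a u) = cscale a (T u)"
    and I: "finite I" and vecU: "\<And>r. r \<in> I \<Longrightarrow> vec r \<in> U"
    and padd: "\<And>r u v. \<psi> r (u + v) = \<psi> r u + \<psi> r v"
    and pscale: "\<And>r a u. \<psi> r (cscale a u) = a * \<psi> r u"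
    and pK: "\<And>r k. r \<in> I \<Longrightarrow> k \<in> K \<Longrightarrow> \<psi> r k = 0"
    and decomp: "\<And>u. u \<in> U \<Longrightarrow> u - (\<Sum>r\<in>I. cscale (\<psi> r u) (vec r)) \<in> K"
  shows "quot_trace U K T = (\<Sum>r\<in>I. \<psi> r (T (vec r)))"
proof -
  define Pr where "Pr = (\<lambda>(B, Cb). Cb \<subseteq> K \<and> \<not> cs.dependent Cb \<and> cs.span Cb = K \<and>
                                B \<subseteq> U \<and> B \<inter> Cb = {} \<and> \<not> cs.dependent (B \<union> Cb) \<and>
                                cs.span (B \<union> Cb) = U)"
  have ex: "\<exists>x. Pr x"
  proof -
    obtain Cb where Cb: "Cb \<subseteq> K" "cs.independent Cb" "K \<subseteq> cs.span Cb"
      by (rule cs.maximal_independent_subset)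
    have spC: "cs.span Cb = K" using Cb subK cs.span_minimal by blast
    obtain B' where B': "Cb \<subseteq> B'" "B' \<subseteq> U" "cs.independent B'" "U \<subseteq> cs.span B'"
      using cs.maximal_independent_subset_extend[of Cb U] Cb KU by blast
    have "cs.span B' = U" using B' subU cs.span_minimal by blast
    moreover have "(B' - Cb) \<union> Cb = B'" using B' by blast
    ultimately have "Pr (B' - Cb, Cb)" using Cb spC B' unfolding Pr_def by auto
    then show ?thesis by blast
  qed
  obtain B Cb where BC: "(B, Cb) = (SOME x. Pr x)" by (metis surj_pair)
  have P: "Pr (B, Cb)" using someI_ex[OF ex] BC by simp
  have qt: "quot_trace U K T = (\<Sum>b\<in>B. cs.representation (B \<union> Cb) (T b) b)"
    unfolding quot_trace_def Pr_def[symmetric] BC[symmetric] by simp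
  define BB where "BB = B \<union> Cb"
  have ind: "cs.independent BB" and spB: "cs.span BB = U" and CbK: "Cb \<subseteq> K" and spC: "cs.span Cb = K"
    and BU: "B \<subseteq> U" and disj: "B \<inter> Cb = {}"
    using P unfolding Pr_def BB_def by auto
  have finBB: "finite BB"
    using cs.independent_span_bound[OF D(1) ind] spB D(2) cs.span_superset by blast
  hence finB: "finite B" and finC: "finite Cb" unfolding BB_def by auto
  define \<phi> where "\<phi> b v = cs.representation BB v b" for b v
  have phi_add: "\<phi> b (u + v) = \<phi> b u + \<phi> b v" if "u \<in> U" "v \<in> U" for b u v
    using cs.representation_add[OF ind, of v u] that spB unfolding \<phi>_def by auto
  have phi_scale: "\<phi> b (cscale a u) = a * \<phi> b u" if "u \<in> U" for a b u
    using cs.representation_scale[OF ind, of u a] that spB unfolding \<phi>_def by auto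
  have phi_K: "\<phi> b k = 0" if "k \<in> K" "b \<in> B" for b k
  proof -
    have "cs.representation BB k = cs.representation Cb k"
      using cs.representation_extend[OF ind, of k Cb] that spC unfolding BB_def by auto
    then show ?thesis using cs.representation_ne_zero[of Cb k b] that disj unfolding \<phi>_def by auto
  qed
  have expand: "v = (\<Sum>x\<in>BB. cscale (\<phi> x v) x)" if "v \<in> U" for v
    using cs.sum_representation_eq[OF ind, of v BB] that spB finBB unfolding \<phi>_def by auto
  have phi0: "\<phi> b 0 = 0" for b by (simp add: \<phi>_def cs.representation_zero)
  have phi_sum: "\<phi> b (\<Sum>r\<in>J. f r) = (\<Sum>r\<in>J. \<phi> b (f r))" if "\<And>r. r \<in> J \<Longrightarrow> f r \<in> U" for b and J :: "'r set" and f
    using that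
  proof (induct J rule: infinite_finite_induct)
    case (empty) then show ?case by (simp only: sum.empty phi0)
  next
    case (insert x F)
    have "sum f F \<in> U" using insert subU by (intro cs.subspace_sum) auto
    moreover have "f x \<in> U" using insert by auto
    moreover have "\<phi> b (sum f F) = (\<Sum>r\<in>F. \<phi> b (f r))" using insert by auto
    ultimately show ?case using phi_add[of "f x" "sum f F" b] by (simp only: sum.insert[OF insert(1,2)])
  next
    case (infinite J) then show ?case by (simp only: sum.infinite[OF infinite(1)] phi0)
  qed
  have c0: "cscale 0 v = 0" for v :: "'x \<Rightarrow> complex" by (simp add: fun_eq_iff)
  have T0: "T 0 = 0" using Tscale[of 0 0] by (simp only: c0)
  have psi0: "\<psi> r 0 = 0" for r using pscale[of r 0 0] by (simp only: c0 mult_zero_left)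
  have Tsum: "T (\<Sum>r\<in>J. f r) = (\<Sum>r\<in>J. T (f r))" for J f
    by (rule add_sum_hom[where f=T]) (auto simp: Tadd T0)
  have psum: "\<psi> r (\<Sum>j\<in>J. f j) = (\<Sum>j\<in>J. \<psi> r (f j))" for r J f
    by (rule add_sum_hom[where f="\<psi> r"]) (auto simp: padd psi0)
  have step1: "\<phi> b (T b) = (\<Sum>r\<in>I. \<psi> r b * \<phi> b (T (vec r)))" if b: "b \<in> B" for b
  proof -
    have bU: "b \<in> U" using b BU by auto
    define kb where "kb = b - (\<Sum>r\<in>I. cscale (\<psi> r b) (vec r))"
    have kbK: "kb \<in> K" using decomp[OF bU] kb_def by simp
    have eqb: "b = (\<Sum>r\<in>I. cscale (\<psi> r b) (vec r)) + kb" unfolding kb_def by simp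
    have "T b = T (\<Sum>r\<in>I. cscale (\<psi> r b) (vec r)) + T kb"
      using arg_cong[of _ _ T, OF eqb] Tadd by simp
    also have "T (\<Sum>r\<in>I. cscale (\<psi> r b) (vec r)) = (\<Sum>r\<in>I. cscale (\<psi> r b) (T (vec r)))"
      unfolding Tsum by (intro sum.cong refl Tscale)
    finally have "T b = (\<Sum>r\<in>I. cscale (\<psi> r b) (T (vec r))) + T kb" .
    moreover have "(\<Sum>r\<in>I. cscale (\<psi> r b) (T (vec r))) \<in> U"
      using vecU TU subU by (intro cs.subspace_sum cs.subspace_scale) auto
    moreover have "T kb \<in> U" using TK kbK KU by auto
    ultimately have "\<phi> b (T b) = \<phi> b (\<Sum>r\<in>I. cscale (\<psi> r b) (T (vec r))) + \<phi> b (T kb)"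
      using phi_add by simp
    also have "\<phi> b (T kb) = 0" using phi_K TK kbK b by auto
    also have "\<phi> b (\<Sum>r\<in>I. cscale (\<psi> r b) (T (vec r))) = (\<Sum>r\<in>I. \<phi> b (cscale (\<psi> r b) (T (vec r))))"
      using vecU TU subU by (intro phi_sum cs.subspace_scale) auto
    also have "\<dots> = (\<Sum>r\<in>I. \<psi> r b * \<phi> b (T (vec r)))"
      using vecU TU by (intro sum.cong refl phi_scale) auto
    finally show ?thesis by simp
  qed
  have step2: "\<psi> r (T (vec r)) = (\<Sum>b\<in>B. \<phi> b (T (vec r)) * \<psi> r b)" if r: "r \<in> I" for r
  proof -
    have tU: "T (vec r) \<in> U" using TU vecU r by auto
    have "\<psi> r (T (vec r)) = \<psi> r (\<Sum>x\<in>BB. cscale (\<phi> x (T (vec r))) x)"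
      using expand[OF tU] by simp
    also have "\<dots> = (\<Sum>x\<in>BB. \<phi> x (T (vec r)) * \<psi> r x)" by (simp add: psum pscale)
    also have "\<dots> = (\<Sum>x\<in>B. \<phi> x (T (vec r)) * \<psi> r x) + (\<Sum>x\<in>Cb. \<phi> x (T (vec r)) * \<psi> r x)"
      unfolding BB_def using finB finC disj by (rule sum.union_disjoint)
    also have "(\<Sum>x\<in>Cb. \<phi> x (T (vec r)) * \<psi> r x) = 0"
      using pK[OF r] CbK by (intro sum.neutral) auto
    finally show ?thesis by simp
  qed
  have "quot_trace U K T = (\<Sum>b\<in>B. \<phi> b (T b))" using qt unfolding \<phi>_def BB_def by simp
  also have "\<dots> = (\<Sum>b\<in>B. \<Sum>r\<in>I. \<psi> r b * \<phi> b (T (vec r)))" using step1 by simp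
  also have "\<dots> = (\<Sum>r\<in>I. \<Sum>b\<in>B. \<phi> b (T (vec r)) * \<psi> r b)"
    by (subst sum.swap) (simp add: mult.commute)
  also have "\<dots> = (\<Sum>r\<in>I. \<psi> r (T (vec r)))" using step2 by simp
  finally show ?thesis .
qed

lemma root_inj:
  fixes m :: nat
  assumes m: "m > 0" and i: "i < m" and j: "j < m"
    and eq: "cis (2 * pi / m) ^ i = cis (2 * pi / m) ^ j"
  shows "i = j"
proof (rule ccontr)
  assume ne: "i \<noteq> j"
  have one: "cis (2 * pi / m) ^ k \<noteq> 1" if k: "0 < k" "k < m" for k
  proof
    assume "cis (2 * pi / m) ^ k = 1"
    then have "cis (real k * (2 * pi / m)) = 1" by (simp add: DeMoivre)
    then have "cos (real k * (2 * pi / m)) = 1" by (metis Re_complex_of_real cis.simps(1) one_complex.simps(1))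
    then obtain n :: int where n: "real k * (2 * pi / m) = of_int n * 2 * pi" using cos_one_2pi_int by blast
    then have "real k / m = of_int n" using m by (simp add: field_simps)
    moreover have "0 < real k / m" "real k / m < 1" using k m by auto
    ultimately show False by (metis floor_of_int floor_less_zero floor_eq_iff less_irrefl of_int_0 of_int_less_1_iff le_less_trans less_imp_le zero_less_floor of_int_0_less_iff)
  qed
  let ?w = "cis (2 * pi / m)"
  have w0: "?w \<noteq> 0" by (metis cis_neq_zero)
  show False
  proof (cases "i < j")
    case True
    have "?w ^ j = ?w ^ i * ?w ^ (j - i)" using True by (simp add: power_add[symmetric])
    then have "?w ^ (j - i) = 1" using eq w0 by simp
    then show False using one[of "j - i"] True j by auto
  next
    case False
    then have ji: "j < i" using ne by auto
    have "?w ^ i = ?w ^ j * ?w ^ (i - j)" using ji by (simp add: power_add[symmetric])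
    then have "?w ^ (i - j) = 1" using eq w0 by simp
    then show False using one[of "i - j"] ji i by auto
  qed
qed

lemma root_pow_m: "m > 0 \<Longrightarrow> cis (2 * pi / m) ^ m = 1"
  by (simp add: DeMoivre)

locale fgrp = group G for G (structure) +
  fixes s assumes fin: "finite (carrier G)" and sG: "s \<in> carrier G"
begin

lemma l_canc: "x \<in> carrier G \<Longrightarrow> y \<in> carrier G \<Longrightarrow> z \<in> carrier G \<Longrightarrow> (x \<otimes> y = x \<otimes> z) = (y = z)"
  by simp
lemma cancel1: "x \<in> carrier G \<Longrightarrow> y \<in> carrier G \<Longrightarrow> x \<otimes> (inv x \<otimes> y) = y"
  by (simp add: m_assoc[symmetric])
lemma cancel2: "x \<in> carrier G \<Longrightarrow> y \<in> carrier G \<Longrightarrow> inv x \<otimes> (x \<otimes> y) = y"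
  by (simp add: m_assoc[symmetric])

definition m where "m = ord s"
lemma m_pos: "m > 0" unfolding m_def using ord_ge_1[OF fin sG] by simp
lemma pw_m: "s [^] m = \<one>" unfolding m_def using sG by simp

lemma pw_mod: "s [^] j = s [^] (j mod m)"
proof -
  have "s [^] j = s [^] (m * (j div m) + j mod m)" by simp
  also have "\<dots> = (s [^] m) [^] (j div m) \<otimes> s [^] (j mod m)"
    by (simp only: nat_pow_pow[OF sG] nat_pow_mult[OF sG])
  also have "\<dots> = s [^] (j mod m)" using pw_m sG by simp
  finally show ?thesis .
qed

definition H where "H = (\<lambda>j. s [^] j) ` {..<m}"

lemma H_mem: "s [^] (j::nat) \<in> H"
  unfolding H_def using pw_mod[of j] m_pos by (intro image_eqI[of _ _ "j mod m"]) auto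
lemma H_sub: "H \<subseteq> carrier G" unfolding H_def using sG by auto
lemma H_G: "y \<in> H \<Longrightarrow> y \<in> carrier G" using H_sub by auto
lemma one_H: "\<one> \<in> H" using H_mem[of "0::nat"] by simp
lemma s_H: "s \<in> H" using H_mem[of "Suc 0"] sG by simp
lemma H_mult: "y \<in> H \<Longrightarrow> z \<in> H \<Longrightarrow> y \<otimes> z \<in> H"
  unfolding H_def using sG by (auto simp: nat_pow_mult H_mem[unfolded H_def])
lemma H_inv: assumes y: "y \<in> H" shows "inv y \<in> H"
proof -
  obtain j where j: "j < m" "y = s [^] j" using y unfolding H_def by auto
  have "s [^] (m - j) \<otimes> y = \<one>" using j sG pw_m by (simp add: nat_pow_mult)
  then have "inv y = s [^] (m - j)" using j sG by (intro inv_equality) auto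
  then show ?thesis using H_mem by simp
qed
lemma H_cancel: assumes y: "y \<in> H" and yz: "y \<otimes> z \<in> H" and z: "z \<in> carrier G" shows "z \<in> H"
proof -
  have "z = inv y \<otimes> (y \<otimes> z)" using cancel2 H_G[OF y] z by simp
  then show ?thesis using H_mult[OF H_inv[OF y] yz] by simp
qed
lemma H_comm: assumes y: "y \<in> H" shows "y \<otimes> s = s \<otimes> y"
proof -
  obtain j :: nat where j: "y = s [^] j" using y unfolding H_def by auto
  show ?thesis unfolding j using sG nat_pow_Suc2[of s j] by simp
qed

lemma pw_inj: "i < m \<Longrightarrow> j < m \<Longrightarrow> s [^] i = s [^] j \<Longrightarrow> i = j"
  using ord_inj[OF sG] m_pos unfolding m_def inj_on_def by (metis One_nat_def Suc_pred atLeastAtMost_iff less_Suc_eq_le zero_le)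

definition exn where "exn y = (THE j. j < m \<and> s [^] j = y)"
lemma exn_pw: "j < m \<Longrightarrow> exn (s [^] j) = j"
  unfolding exn_def using pw_inj by (intro the_equality) auto
lemma exn: "y \<in> H \<Longrightarrow> exn y < m \<and> s [^] (exn y) = y"
  unfolding H_def using exn_pw by auto

definition w where "w = cis (2 * pi / m)"
definition mu where "mu y = w ^ (exn y)"

lemma w_m: "w ^ m = 1" unfolding w_def using root_pow_m m_pos by simp
lemma w_mod: "w ^ k = w ^ (k mod m)"
proof -
  have "w ^ k = w ^ (m * (k div m) + k mod m)" by simp
  also have "\<dots> = (w ^ m) ^ (k div m) * w ^ (k mod m)" by (simp only: power_add power_mult)
  finally show ?thesis using w_m by simp
qed

lemma mu_mult: assumes "y \<in> H" "z \<in> H" shows "mu (y \<otimes> z) = mu y * mu z"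
proof -
  have "y \<otimes> z = s [^] ((exn y + exn z) mod m)"
    using exn[OF assms(1)] exn[OF assms(2)] pw_mod sG by (metis nat_pow_mult)
  then have "exn (y \<otimes> z) = (exn y + exn z) mod m" using exn_pw m_pos by simp
  then show ?thesis unfolding mu_def using w_mod[of "exn y + exn z"] by (simp add: power_add)
qed
lemma mu_one: "mu \<one> = 1" unfolding mu_def using exn_pw[of 0] m_pos by (simp del: nat_pow_0 add: nat_pow_0[symmetric])
lemma mu_inj: assumes "y \<in> H" "z \<in> H" "mu y = mu z" shows "y = z"
proof -
  have "exn y = exn z" using root_inj[OF m_pos, of "exn y" "exn z"] exn assms unfolding mu_def w_def by auto
  then show ?thesis using exn assms by metis
qed
lemma mu_pow_m: "mu y ^ m = 1" unfolding mu_def by (metis power_mult mult.commute power_one w_m)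
lemma mu_nz: "mu y \<noteq> 0" unfolding mu_def w_def by (simp add: cis_neq_zero)


definition cs where "cs x = (\<lambda>h. x \<otimes> h) ` H"

lemma cs_mem: assumes x: "x \<in> carrier G" and y: "y \<in> carrier G"
  shows "y \<in> cs x \<longleftrightarrow> inv x \<otimes> y \<in> H"
proof
  assume "y \<in> cs x"
  then obtain h where h: "h \<in> H" "y = x \<otimes> h" unfolding cs_def by auto
  then show "inv x \<otimes> y \<in> H" using x H_G cancel2 by simp
next
  assume "inv x \<otimes> y \<in> H"
  moreover have "y = x \<otimes> (inv x \<otimes> y)" using cancel1 x y by simp
  ultimately show "y \<in> cs x" unfolding cs_def by blast
qed

lemma cs_sub: "x \<in> carrier G \<Longrightarrow> cs x \<subseteq> carrier G" unfolding cs_def using H_G by auto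
lemma cs_self: "x \<in> carrier G \<Longrightarrow> x \<in> cs x" using cs_mem one_H by simp

lemma cs_eq: assumes x: "x \<in> carrier G" and y: "y \<in> cs x" shows "cs y = cs x"
proof -
  have yG: "y \<in> carrier G" using y cs_sub x by auto
  have xy: "inv x \<otimes> y \<in> H" using cs_mem x yG y by simp
  have "z \<in> cs y \<longleftrightarrow> z \<in> cs x" if z: "z \<in> carrier G" for z
  proof -
    have eq: "inv x \<otimes> z = (inv x \<otimes> y) \<otimes> (inv y \<otimes> z)"
      using x yG z by (simp add: m_assoc cancel1)
    show ?thesis unfolding cs_mem[OF yG z] cs_mem[OF x z] eq
      using H_mult[OF xy] H_cancel[OF xy] yG z by blast
  qed
  then show ?thesis using cs_sub x yG by blast
qed

definition crep where "crep x = (SOME y. y \<in> cs x)"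
lemma crep: "x \<in> carrier G \<Longrightarrow> crep x \<in> cs x" unfolding crep_def using cs_self by (metis someI)
lemma crep_G: "x \<in> carrier G \<Longrightarrow> crep x \<in> carrier G" using crep cs_sub by blast
lemma crep_cs: "x \<in> carrier G \<Longrightarrow> cs (crep x) = cs x" using cs_eq crep by blast
lemma crep_eq: "x \<in> carrier G \<Longrightarrow> y \<in> cs x \<Longrightarrow> crep y = crep x"
  unfolding crep_def using cs_eq by simp
lemma crep_crep: "x \<in> carrier G \<Longrightarrow> crep (crep x) = crep x" using crep_eq crep by blast

definition Rs where "Rs = crep ` carrier G"
definition xs where "xs = (SOME l. set l = Rs \<and> distinct l)"
lemma fin_Rs: "finite Rs" unfolding Rs_def using fin by simp
lemma xs: "set xs = Rs" "distinct xs"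
  unfolding xs_def using someI_ex[OF finite_distinct_list[OF fin_Rs]] by auto
definition N where "N = length xs"
abbreviation "xr a \<equiv> xs ! a"

lemma xr_Rs: "a < N \<Longrightarrow> xr a \<in> Rs" using xs N_def nth_mem by metis
lemma xr_G: "a < N \<Longrightarrow> xr a \<in> carrier G"
proof -
  assume "a < N" then obtain x where "x \<in> carrier G" "xr a = crep x" using xr_Rs unfolding Rs_def by blast
  then show ?thesis using crep_G by simp
qed
lemma xr_rep: "a < N \<Longrightarrow> crep (xr a) = xr a"
proof -
  assume "a < N" then obtain x where "x \<in> carrier G" "xr a = crep x" using xr_Rs unfolding Rs_def by blast
  then show ?thesis using crep_crep by simp
qed

lemma xr_uniq: assumes a: "a < N" and b: "b < N" and ba: "xr b \<in> cs (xr a)" shows "a = b"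
proof -
  have "crep (xr b) = crep (xr a)" using crep_eq[OF xr_G[OF a] ba] .
  then have "xr a = xr b" using xr_rep a b by simp
  then show ?thesis using xs(2) a b N_def nth_eq_iff_index_eq by metis
qed

lemma xr_ex: assumes y: "y \<in> carrier G" shows "\<exists>a<N. y \<in> cs (xr a)"
proof -
  have "crep y \<in> set xs" using xs Rs_def y by auto
  then obtain a where a: "a < N" "xr a = crep y" using N_def by (metis in_set_conv_nth)
  have "y \<in> cs (crep y)" using crep_cs[OF y] cs_self[OF y] by simp
  then show ?thesis using a by auto
qed

definition rho :: "nat \<Rightarrow> 'a \<Rightarrow> nat \<Rightarrow> nat \<Rightarrow> complex" where
  "rho t g a b = (if inv (xr a) \<otimes> (g \<otimes> xr b) \<in> H then mu (inv (xr a) \<otimes> (g \<otimes> xr b)) ^ t else 0)"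

lemma rho_id: assumes a: "a < N" and b: "b < N" shows "rho t \<one> a b = (if a = b then 1 else 0)"
proof (cases "a = b")
  case True then show ?thesis unfolding rho_def using xr_G[OF a] one_H mu_one by simp
next
  case False
  have "inv (xr a) \<otimes> (\<one> \<otimes> xr b) \<notin> H"
  proof
    assume "inv (xr a) \<otimes> (\<one> \<otimes> xr b) \<in> H"
    then have "xr b \<in> cs (xr a)" using cs_mem xr_G a b by simp
    then show False using xr_uniq a b False by blast
  qed
  then show ?thesis unfolding rho_def using False by simp
qed

lemma rho_mult: assumes g: "g \<in> carrier G" and h: "h \<in> carrier G" and a: "a < N" and b: "b < N"
  shows "rho t (g \<otimes> h) a b = (\<Sum>k<N. rho t g a k * rho t h k b)"
proof -
  have xa: "xr a \<in> carrier G" and xb: "xr b \<in> carrier G" using xr_G a b by auto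
  have iga: "inv g \<otimes> xr a \<in> carrier G" using g xa by simp
  obtain k0 where k0: "k0 < N" "inv g \<otimes> xr a \<in> cs (xr k0)" using xr_ex[OF iga] by blast
  have xk0: "xr k0 \<in> carrier G" using xr_G k0 by auto
  have iff: "inv (xr a) \<otimes> (g \<otimes> xr k) \<in> H \<longleftrightarrow> k = k0" if k: "k < N" for k
  proof -
    have xk: "xr k \<in> carrier G" using xr_G k by auto
    have e1: "inv (inv g \<otimes> xr a) \<otimes> xr k = inv (xr a) \<otimes> (g \<otimes> xr k)"
      using g xa xk by (simp add: inv_mult_group m_assoc)
    have "inv (xr a) \<otimes> (g \<otimes> xr k) \<in> H \<longleftrightarrow> xr k \<in> cs (inv g \<otimes> xr a)"
      using cs_mem[OF iga xk] e1 by simp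
    also have "cs (inv g \<otimes> xr a) = cs (xr k0)" using cs_eq[OF xk0 k0(2)] .
    also have "xr k \<in> cs (xr k0) \<longleftrightarrow> k = k0"
      using xr_uniq[OF k0(1) k] cs_self[OF xk0] by blast
    finally show ?thesis .
  qed
  have "(\<Sum>k<N. rho t g a k * rho t h k b) = (\<Sum>k<N. if k = k0 then rho t g a k0 * rho t h k0 b else 0)"
    by (intro sum.cong refl) (auto simp: rho_def iff)
  also have "\<dots> = rho t g a k0 * rho t h k0 b" using k0 by simp
  finally have sum_eq: "(\<Sum>k<N. rho t g a k * rho t h k b) = rho t g a k0 * rho t h k0 b" .
  define y1 where "y1 = inv (xr a) \<otimes> (g \<otimes> xr k0)"
  define z where "z = inv (xr k0) \<otimes> (h \<otimes> xr b)"
  have y1H: "y1 \<in> H" using iff[OF k0(1)] y1_def by simp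
  have zG: "z \<in> carrier G" unfolding z_def using xk0 h xb by simp
  have wyz: "inv (xr a) \<otimes> ((g \<otimes> h) \<otimes> xr b) = y1 \<otimes> z"
    unfolding y1_def z_def using xa xb xk0 g h by (simp add: m_assoc cancel1)
  show ?thesis
  proof (cases "z \<in> H")
    case True
    have "rho t (g \<otimes> h) a b = mu (y1 \<otimes> z) ^ t" unfolding rho_def wyz using H_mult[OF y1H True] by simp
    also have "\<dots> = mu y1 ^ t * mu z ^ t" using mu_mult[OF y1H True] by (simp add: power_mult_distrib)
    also have "\<dots> = rho t g a k0 * rho t h k0 b" unfolding rho_def using y1H True y1_def z_def by simp
    finally show ?thesis using sum_eq by simp
  next
    case False
    have "y1 \<otimes> z \<notin> H" using H_cancel[OF y1H _ zG] False by blast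
    then have "rho t (g \<otimes> h) a b = 0" unfolding rho_def wyz by simp
    moreover have "rho t h k0 b = 0" unfolding rho_def using False z_def by simp
    ultimately show ?thesis using sum_eq by simp
  qed
qed


definition cnt where "cnt g = card {a\<in>{..<N}. g \<otimes> xr a = xr a \<otimes> s}"

lemma cs_card: assumes x: "x \<in> carrier G" shows "card (cs x) = m"
proof -
  have "cs x = (\<lambda>j. x \<otimes> s [^] j) ` {..<m}" unfolding cs_def H_def by auto
  moreover have "inj_on (\<lambda>j. x \<otimes> s [^] j) {..<m}"
    using pw_inj x sG by (auto simp: inj_on_def)
  ultimately show ?thesis by (simp add: card_image)
qed

lemma fin_cs: "x \<in> carrier G \<Longrightarrow> finite (cs x)" using cs_sub fin finite_subset by blast

lemma Q_cs: assumes g: "g \<in> carrier G" and x: "x \<in> carrier G" and h: "h \<in> H"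
  shows "(g \<otimes> (x \<otimes> h) = (x \<otimes> h) \<otimes> s) \<longleftrightarrow> (g \<otimes> x = x \<otimes> s)"
proof -
  have hG: "h \<in> carrier G" using H_G h by simp
  have "(x \<otimes> h) \<otimes> s = (x \<otimes> s) \<otimes> h" using H_comm[OF h] x hG sG by (simp add: m_assoc)
  moreover have "g \<otimes> (x \<otimes> h) = (g \<otimes> x) \<otimes> h" using g x hG by (simp add: m_assoc)
  ultimately show ?thesis using right_cancel[OF hG] g x sG by simp
qed

lemma countA: assumes g: "g \<in> carrier G"
  shows "card {x \<in> carrier G. g \<otimes> x = x \<otimes> s} = m * cnt g"
proof -
  let ?A = "\<lambda>a. {x \<in> cs (xr a). g \<otimes> x = x \<otimes> s}"
  have un: "{x \<in> carrier G. g \<otimes> x = x \<otimes> s} = (\<Union>a\<in>{..<N}. ?A a)"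
  proof
    show "{x \<in> carrier G. g \<otimes> x = x \<otimes> s} \<subseteq> (\<Union>a\<in>{..<N}. ?A a)"
      using xr_ex by blast
    show "(\<Union>a\<in>{..<N}. ?A a) \<subseteq> {x \<in> carrier G. g \<otimes> x = x \<otimes> s}"
      using cs_sub xr_G by blast
  qed
  have disj: "?A a \<inter> ?A b = {}" if "a \<in> {..<N}" "b \<in> {..<N}" "a \<noteq> b" for a b
  proof (rule ccontr)
    assume "?A a \<inter> ?A b \<noteq> {}"
    then obtain y where y: "y \<in> cs (xr a)" "y \<in> cs (xr b)" by blast
    have "cs (xr a) = cs (xr b)" using cs_eq[OF xr_G y(1)] cs_eq[OF xr_G y(2)] that by auto
    then have "xr b \<in> cs (xr a)" using cs_self xr_G that by auto
    then show False using xr_uniq that by auto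
  qed
  have Aeq: "card (?A a) = (if g \<otimes> xr a = xr a \<otimes> s then m else 0)" if a: "a < N" for a
  proof -
    have xa: "xr a \<in> carrier G" using xr_G a by simp
    have "?A a = (if g \<otimes> xr a = xr a \<otimes> s then cs (xr a) else {})"
    proof -
      have "y \<in> cs (xr a) \<Longrightarrow> (g \<otimes> y = y \<otimes> s) = (g \<otimes> xr a = xr a \<otimes> s)" for y
        unfolding cs_def using Q_cs[OF g xa] by auto
      then show ?thesis by auto
    qed
    then show ?thesis using cs_card[OF xa] by simp
  qed
  have "card {x \<in> carrier G. g \<otimes> x = x \<otimes> s} = (\<Sum>a<N. card (?A a))"
    unfolding un using fin_cs xr_G disj by (intro card_UN_disjoint) auto
  also have "\<dots> = (\<Sum>a<N. if g \<otimes> xr a = xr a \<otimes> s then m else 0)" using Aeq by simp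
  also have "\<dots> = (\<Sum>a\<in>{a\<in>{..<N}. g \<otimes> xr a = xr a \<otimes> s}. m)" by (rule sum.inter_filter[symmetric]) simp
  also have "\<dots> = m * cnt g" unfolding cnt_def by (simp add: mult.commute)
  finally show ?thesis .
qed

lemma countB: assumes g: "g \<in> carrier G" and t: "\<tau> \<in> carrier G" and gt: "g \<otimes> \<tau> = \<tau> \<otimes> s"
  shows "card {x \<in> carrier G. g \<otimes> x = x \<otimes> s} = card {x \<in> carrier G. s \<otimes> x = x \<otimes> s}"
proof -
  have geq: "g = \<tau> \<otimes> s \<otimes> inv \<tau>"
  proof -
    have "g = (g \<otimes> \<tau>) \<otimes> inv \<tau>" using g t by (simp add: m_assoc)
    then show ?thesis using gt by simp
  qed
  have key: "g \<otimes> x = x \<otimes> s \<longleftrightarrow> s \<otimes> (inv \<tau> \<otimes> x) = (inv \<tau> \<otimes> x) \<otimes> s" if x: "x \<in> carrier G" for x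
  proof -
    have e1: "g \<otimes> x = \<tau> \<otimes> (s \<otimes> (inv \<tau> \<otimes> x))" using geq t x sG by (simp add: m_assoc)
    have e2: "x \<otimes> s = \<tau> \<otimes> ((inv \<tau> \<otimes> x) \<otimes> s)" using t x sG by (simp add: m_assoc cancel1)
    show ?thesis unfolding e1 e2 using t x sG by simp
  qed
  have "bij_betw (\<lambda>x. inv \<tau> \<otimes> x) {x \<in> carrier G. g \<otimes> x = x \<otimes> s} {x \<in> carrier G. s \<otimes> x = x \<otimes> s}"
  proof (rule bij_betwI[where g = "\<lambda>y. \<tau> \<otimes> y"])
    show "(\<lambda>x. inv \<tau> \<otimes> x) \<in> {x \<in> carrier G. g \<otimes> x = x \<otimes> s} \<rightarrow> {x \<in> carrier G. s \<otimes> x = x \<otimes> s}"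
      using key t by auto
    show "(\<lambda>y. \<tau> \<otimes> y) \<in> {x \<in> carrier G. s \<otimes> x = x \<otimes> s} \<rightarrow> {x \<in> carrier G. g \<otimes> x = x \<otimes> s}"
      using key t cancel2 by auto
    show "\<tau> \<otimes> (inv \<tau> \<otimes> x) = x" if "x \<in> {x \<in> carrier G. g \<otimes> x = x \<otimes> s}" for x
      using that t cancel1 by auto
    show "inv \<tau> \<otimes> (\<tau> \<otimes> y) = y" if "y \<in> {x \<in> carrier G. s \<otimes> x = x \<otimes> s}" for y
      using that t cancel2 by auto
  qed
  then show ?thesis by (rule bij_betw_same_card)
qed

lemma cnt_conj: assumes g: "g \<in> carrier G" and t: "\<tau> \<in> carrier G" and gt: "g \<otimes> \<tau> = \<tau> \<otimes> s"
  shows "cnt g = cnt s"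
  using countA[OF g] countA[OF sG] countB[OF g t gt] m_pos by simp

lemma cnt_pos: "cnt s > 0"
proof -
  obtain a where a: "a < N" "\<one> \<in> cs (xr a)" using xr_ex[of \<one>] by auto
  have xa: "xr a \<in> carrier G" using xr_G a by simp
  have "inv (xr a) \<in> H" using cs_mem[OF xa, of \<one>] a xa by simp
  then have "xr a \<in> H" using H_inv xa by fastforce
  then have "s \<otimes> xr a = xr a \<otimes> s" using H_comm by simp
  then have "a \<in> {a\<in>{..<N}. s \<otimes> xr a = xr a \<otimes> s}" using a by simp
  moreover have "finite {a\<in>{..<N}. s \<otimes> xr a = xr a \<otimes> s}" by simp
  ultimately show ?thesis unfolding cnt_def using card_gt_0_iff by blast
qed

lemma cnt_nconj: assumes "\<not> (\<exists>\<tau>\<in>carrier G. g \<otimes> \<tau> = \<tau> \<otimes> s)" shows "cnt g = 0"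
proof -
  have "{a\<in>{..<N}. g \<otimes> xr a = xr a \<otimes> s} = {}" using assms xr_G by auto
  then show ?thesis unfolding cnt_def by simp
qed

definition beta where "beta t = inverse (mu s ^ t) / (of_nat m * of_nat (cnt s))"

lemma geo: assumes y: "y \<in> H"
  shows "(\<Sum>t<m. beta t * mu y ^ t) = (if y = s then 1 / of_nat (cnt s) else 0)"
proof -
  let ?z = "mu y / mu s"
  have "(\<Sum>t<m. beta t * mu y ^ t) = (\<Sum>t<m. ?z ^ t) / (of_nat m * of_nat (cnt s))"
    unfolding beta_def by (simp add: sum_divide_distrib power_divide field_simps)
  also have "(\<Sum>t<m. ?z ^ t) = (if y = s then of_nat m else 0)"
  proof (cases "y = s")
    case True then show ?thesis using mu_nz by simp
  next
    case False
    then have "?z \<noteq> 1" using mu_inj[OF y s_H] mu_nz by auto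
    moreover have "?z ^ m = 1" using mu_pow_m mu_nz by (simp add: power_divide)
    ultimately show ?thesis using False mu_nz[of s] by (simp add: sum_gp_strict)
  qed
  finally show ?thesis using m_pos by auto
qed

definition tr where "tr t g = (\<Sum>k<N. rho t g k k)"

lemma main_sum: assumes g: "g \<in> carrier G"
  shows "(\<Sum>t<m. beta t * tr t g) = (if \<exists>\<tau>\<in>carrier G. g \<otimes> \<tau> = \<tau> \<otimes> s then 1 else 0)"
proof -
  have "(\<Sum>t<m. beta t * tr t g) = (\<Sum>a<N. \<Sum>t<m. beta t * rho t g a a)"
    unfolding tr_def by (simp add: sum_distrib_left sum.swap[of _ "{..<m}"])
  also have "\<dots> = (\<Sum>a<N. if g \<otimes> xr a = xr a \<otimes> s then 1 / of_nat (cnt s) else 0)"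
  proof (intro sum.cong refl)
    fix a assume a: "a \<in> {..<N}"
    have xa: "xr a \<in> carrier G" using xr_G a by simp
    define y where "y = inv (xr a) \<otimes> (g \<otimes> xr a)"
    have yQ: "y = s \<longleftrightarrow> g \<otimes> xr a = xr a \<otimes> s" unfolding y_def using inv_solve_left'[OF sG xa] g xa by simp
    show "(\<Sum>t<m. beta t * rho t g a a) = (if g \<otimes> xr a = xr a \<otimes> s then 1 / of_nat (cnt s) else 0)"
    proof (cases "y \<in> H")
      case True
      have "(\<Sum>t<m. beta t * rho t g a a) = (\<Sum>t<m. beta t * mu y ^ t)"
        unfolding rho_def y_def[symmetric] using True by simp
      then show ?thesis using geo[OF True] yQ by simp
    next
      case False
      then have "y \<noteq> s" using s_H by auto
      then show ?thesis unfolding rho_def y_def[symmetric] using False yQ by simp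
    qed
  qed
  also have "\<dots> = of_nat (cnt g) / of_nat (cnt s)"
    unfolding cnt_def by (simp add: sum.inter_filter[symmetric] del: sum.inter_filter)
  also have "\<dots> = (if \<exists>\<tau>\<in>carrier G. g \<otimes> \<tau> = \<tau> \<otimes> s then 1 else 0)"
    using cnt_conj[OF g] cnt_nconj cnt_pos by auto
  finally show ?thesis .
qed

lemma RT_exists:
  "\<exists>W :: (complex \<times> nat \<times> ('a \<Rightarrow> nat \<Rightarrow> nat \<Rightarrow> complex)) list.
     (\<forall>(a, n, \<rho>) \<in> set W. (\<forall>i<n. \<forall>j<n. \<rho> \<one> i j = (if i = j then 1 else 0)) \<and>
        (\<forall>g\<in>carrier G. \<forall>h\<in>carrier G. \<forall>i<n. \<forall>j<n. \<rho> (g \<otimes> h) i j = (\<Sum>k<n. \<rho> g i k * \<rho> h k j))) \<and>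
     (\<forall>g\<in>carrier G. (\<Sum>(a, n, \<rho>) \<leftarrow> W. a * (\<Sum>k<n. \<rho> g k k)) =
        (if \<exists>\<tau>\<in>carrier G. g \<otimes> \<tau> = \<tau> \<otimes> s then 1 else 0))"
proof (intro exI conjI)
  let ?W = "map (\<lambda>t. (beta t, N, rho t)) [0..<m]"
  show "\<forall>(a, n, \<rho>) \<in> set ?W. (\<forall>i<n. \<forall>j<n. \<rho> \<one> i j = (if i = j then 1 else 0)) \<and>
        (\<forall>g\<in>carrier G. \<forall>h\<in>carrier G. \<forall>i<n. \<forall>j<n. \<rho> (g \<otimes> h) i j = (\<Sum>k<n. \<rho> g i k * \<rho> h k j))"
    using rho_id rho_mult by auto
  show "\<forall>g\<in>carrier G. (\<Sum>(a, n, \<rho>) \<leftarrow> ?W. a * (\<Sum>k<n. \<rho> g k k)) =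
        (if \<exists>\<tau>\<in>carrier G. g \<otimes> \<tau> = \<tau> \<otimes> s then 1 else 0)"
  proof
    fix g assume g: "g \<in> carrier G"
    have "(\<Sum>(a, n, \<rho>) \<leftarrow> ?W. a * (\<Sum>k<n. \<rho> g k k)) = (\<Sum>t\<leftarrow>[0..<m]. beta t * tr t g)"
      unfolding tr_def by (simp add: comp_def)
    also have "\<dots> = (\<Sum>t<m. beta t * tr t g)"
      by (simp add: interv_sum_list_conv_sum_set_nat atLeast0LessThan)
    finally show "(\<Sum>(a, n, \<rho>) \<leftarrow> ?W. a * (\<Sum>k<n. \<rho> g k k)) =
        (if \<exists>\<tau>\<in>carrier G. g \<otimes> \<tau> = \<tau> \<otimes> s then 1 else 0)" using main_sum[OF g] by simp
  qed
qed

end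

locale fic =
  fixes C :: "('o, 'm) cat"
  assumes FI: "FI_type C"
begin

lemma catax: "is_category C" using FI unfolding FI_type_def by blast

lemma hom_obj: "f \<in> Hom C a b \<Longrightarrow> a \<in> Obj C \<and> b \<in> Obj C"
  using catax unfolding is_category_def by (metis empty_iff)
lemma hom_uniq: "f \<in> Hom C a b \<Longrightarrow> f \<in> Hom C a' b' \<Longrightarrow> a = a' \<and> b = b'"
  using catax unfolding is_category_def by (metis empty_iff)
lemma id_hom: "a \<in> Obj C \<Longrightarrow> idm C a \<in> Hom C a a"
  using catax unfolding is_category_def by (metis empty_iff)
lemma comp_hom: "f \<in> Hom C a b \<Longrightarrow> g \<in> Hom C b c \<Longrightarrow> cmp C g f \<in> Hom C a c"
  using catax unfolding is_category_def by (metis empty_iff)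
lemma assoc: "f \<in> Hom C a b \<Longrightarrow> g \<in> Hom C b c \<Longrightarrow> h \<in> Hom C c d \<Longrightarrow>
        cmp C h (cmp C g f) = cmp C (cmp C h g) f"
  using catax unfolding is_category_def by (metis empty_iff)
lemma id_left: "f \<in> Hom C a b \<Longrightarrow> cmp C (idm C b) f = f"
  using catax unfolding is_category_def by (metis empty_iff)
lemma id_right: "f \<in> Hom C a b \<Longrightarrow> cmp C f (idm C a) = f"
  using catax unfolding is_category_def by (metis empty_iff)
lemma fin_hom: "finite (Hom C a b)"
  using FI[unfolded FI_type_def, THEN conjunct2, THEN conjunct1] by blast
lemma mono: "f \<in> Hom C a b \<Longrightarrow> g \<in> Hom C e a \<Longrightarrow> h \<in> Hom C e a \<Longrightarrow> cmp C f g = cmp C f h \<Longrightarrow> g = h"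
  using FI[unfolded FI_type_def, THEN conjunct2, THEN conjunct2, THEN conjunct1] by blast
lemma endo_aut: "f \<in> Hom C c c \<Longrightarrow> f \<in> Aut C c"
  using FI[unfolded FI_type_def, THEN conjunct2, THEN conjunct2, THEN conjunct2, THEN conjunct1] by blast

lemma Aut_eq: "Aut C c = Hom C c c"
  using endo_aut unfolding Aut_def by blast

lemma aut_inv_ex: "g \<in> Aut C c \<Longrightarrow> \<exists>h\<in>Aut C c. cmp C h g = idm C c \<and> cmp C g h = idm C c"
  unfolding Aut_def by auto

definition ainv where "ainv c g = (SOME h. h \<in> Aut C c \<and> cmp C h g = idm C c \<and> cmp C g h = idm C c)"

lemma ainv: assumes "g \<in> Aut C c"
  shows "ainv c g \<in> Aut C c" "cmp C (ainv c g) g = idm C c" "cmp C g (ainv c g) = idm C c"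
  using someI_ex[OF aut_inv_ex[OF assms, unfolded Bex_def]] unfolding ainv_def by auto

lemma aut_hom: "g \<in> Aut C c \<Longrightarrow> g \<in> Hom C c c" unfolding Aut_def by auto
lemma aut_obj: "g \<in> Aut C c \<Longrightarrow> c \<in> Obj C" using aut_hom hom_obj by blast
lemma id_aut: "c \<in> Obj C \<Longrightarrow> idm C c \<in> Aut C c" using id_hom Aut_eq by auto
lemma comp_aut: "g \<in> Aut C c \<Longrightarrow> h \<in> Aut C c \<Longrightarrow> cmp C g h \<in> Aut C c"
  using comp_hom Aut_eq by auto
lemma fin_aut: "finite (Aut C c)" using fin_hom Aut_eq by auto

abbreviation Orb where "Orb c f \<equiv> orbit_cls C c f"

lemma O_sub: "f \<in> Hom C c e \<Longrightarrow> Orb c f \<subseteq> Hom C c e"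
  unfolding orbit_cls_def using comp_hom aut_hom by blast

lemma O_self: "f \<in> Hom C c e \<Longrightarrow> f \<in> Orb c f"
  unfolding orbit_cls_def using id_right[of f c e] id_aut hom_obj by (metis (mono_tags, lifting) mem_Collect_eq)

lemma O_mem: "f' \<in> Orb c f \<longleftrightarrow> (\<exists>g\<in>Aut C c. f' = cmp C f g)"
  unfolding orbit_cls_def by auto

lemma O_eq: assumes f: "f \<in> Hom C c e" and f': "f' \<in> Orb c f" shows "Orb c f' = Orb c f"
proof -
  obtain g where g: "g \<in> Aut C c" "f' = cmp C f g" using f' O_mem by auto
  have gh: "g \<in> Hom C c c" using g aut_hom by auto
  show ?thesis
  proof
    show "Orb c f' \<subseteq> Orb c f"
    proof
      fix x assume "x \<in> Orb c f'"
      then obtain h where h: "h \<in> Aut C c" "x = cmp C f' h" using O_mem by auto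
      have "x = cmp C f (cmp C g h)" using h g assoc[of h c c g c f e] aut_hom f by auto
      then show "x \<in> Orb c f" using O_mem comp_aut g h by auto
    qed
  next
    show "Orb c f \<subseteq> Orb c f'"
    proof
      fix x assume "x \<in> Orb c f"
      then obtain h where h: "h \<in> Aut C c" "x = cmp C f h" using O_mem by auto
      have "cmp C f' (cmp C (ainv c g) h) = cmp C (cmp C f' (ainv c g)) h"
        using assoc[of h c c "ainv c g" c f' e] h ainv[OF g(1)] aut_hom comp_hom[OF gh f] g by auto
      also have "cmp C f' (ainv c g) = cmp C f (cmp C g (ainv c g))"
        using g(2) assoc[of "ainv c g" c c g c f e] ainv[OF g(1)] aut_hom gh f by auto
      also have "\<dots> = f" using ainv[OF g(1)] id_right[OF f] by simp
      finally have "x = cmp C f' (cmp C (ainv c g) h)" using h by simp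
      then show "x \<in> Orb c f'" using O_mem comp_aut ainv[OF g(1)] h by auto
    qed
  qed
qed

definition rp where "rp c f = (SOME h. h \<in> Orb c f)"

lemma rp_O: "f \<in> Hom C c e \<Longrightarrow> rp c f \<in> Orb c f"
  unfolding rp_def using O_self by (metis someI_ex)
lemma rp_hom: "f \<in> Hom C c e \<Longrightarrow> rp c f \<in> Hom C c e"
  using rp_O O_sub by blast
lemma rp_eq: "f \<in> Hom C c e \<Longrightarrow> f' \<in> Orb c f \<Longrightarrow> rp c f' = rp c f"
  unfolding rp_def using O_eq by simp
lemma rp_rp: "f \<in> Hom C c e \<Longrightarrow> rp c (rp c f) = rp c f"
  using rp_eq rp_O by blast
lemma O_rp: "f \<in> Hom C c e \<Longrightarrow> Orb c (rp c f) = Orb c f"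
  using O_eq rp_O by blast

lemma rp_comp: "f \<in> Hom C c e \<Longrightarrow> g \<in> Aut C c \<Longrightarrow> rp c (cmp C f g) = rp c f"
  using rp_eq O_mem by blast

lemma gof_ex: assumes f: "f \<in> Hom C c e" shows "\<exists>!g. g \<in> Aut C c \<and> cmp C (rp c f) g = f"
proof -
  have "f \<in> Orb c (rp c f)" using O_rp[OF f] O_self[OF f] by simp
  then obtain g where g: "g \<in> Aut C c" "f = cmp C (rp c f) g" using O_mem by auto
  moreover have "g' = g" if "g' \<in> Aut C c" "cmp C (rp c f) g' = f" for g'
    using mono[of "rp c f" c e g' c g] that g rp_hom[OF f] aut_hom by auto
  ultimately show ?thesis by metis
qed

definition gof where "gof c f = (THE g. g \<in> Aut C c \<and> cmp C (rp c f) g = f)"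

lemma gof: assumes "f \<in> Hom C c e" shows "gof c f \<in> Aut C c" "cmp C (rp c f) (gof c f) = f"
  using theI'[OF gof_ex[OF assms]] unfolding gof_def by auto

lemma gof_uniq: "f \<in> Hom C c e \<Longrightarrow> g \<in> Aut C c \<Longrightarrow> cmp C (rp c f) g = f \<Longrightarrow> gof c f = g"
  using gof_ex gof by blast

lemma gof_comp: assumes f: "f \<in> Hom C c e" and g: "g \<in> Aut C c"
  shows "gof c (cmp C f g) = cmp C (gof c f) g"
proof (rule gof_uniq)
  show "cmp C f g \<in> Hom C c e" using comp_hom f aut_hom g by blast
  show "cmp C (gof c f) g \<in> Aut C c" using comp_aut gof(1)[OF f] g by blast
  have "cmp C (rp c f) (cmp C (gof c f) g) = cmp C (cmp C (rp c f) (gof c f)) g"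
    using assoc[of g c c "gof c f" c "rp c f" e] g gof(1)[OF f] aut_hom rp_hom[OF f] by auto
  then show "cmp C (rp c (cmp C f g)) (cmp C (gof c f) g) = cmp C f g"
    using rp_comp[OF f g] gof(2)[OF f] by simp
qed

lemma gof_rep: "r \<in> Hom C c e \<Longrightarrow> rp c r = r \<Longrightarrow> gof c r = idm C c"
  using gof_uniq id_aut id_right hom_obj by metis

end

lemma sum_fun_apply: "(sum f A) x = (\<Sum>a\<in>A. (f a :: 'x \<Rightarrow> 'b::comm_monoid_add) x)"
  by (induct A rule: infinite_finite_induct) auto

lemma delta_apply: "delta x y = (if y = x then 1 else 0)" by (simp add: delta_def)

lemma sum_delta_scale:
  assumes "finite A"
  shows "(\<Sum>y\<in>A. cscale (delta x y) (F y)) = (if x \<in> A then F x else 0)"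
proof -
  have "(\<Sum>y\<in>A. cscale (delta x y) (F y)) = (\<Sum>y\<in>A. if y = x then F y else 0)"
    by (intro sum.cong refl) (auto simp: delta_def fun_eq_iff)
  also have "\<dots> = (if x \<in> A then F x else 0)" using assms by (simp add: sum.delta')
  finally show ?thesis .
qed

lemma sum_delta_mult:
  assumes "finite A"
  shows "(\<Sum>y\<in>A. delta x y * (F y :: complex)) = (if x \<in> A then F x else 0)"
proof -
  have "(\<Sum>y\<in>A. delta x y * F y) = (\<Sum>y\<in>A. if y = x then F y else 0)"
    by (intro sum.cong refl) (auto simp: delta_def)
  also have "\<dots> = (if x \<in> A then F x else 0)" using assms by (simp add: sum.delta')
  finally show ?thesis .
qed

definition trc :: "nat \<Rightarrow> ('m \<Rightarrow> nat \<Rightarrow> nat \<Rightarrow> complex) \<Rightarrow> 'm \<Rightarrow> complex" where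
  "trc n \<rho> g = (\<Sum>k<n. \<rho> g k k)"

context fic
begin

definition Reps where "Reps c e = {r \<in> Hom C c e. rp c r = r}"

lemma fin_Reps: "finite (Reps c e)" unfolding Reps_def using fin_hom by auto

end

locale ficL = fic C for C :: "('o, 'm) cat" +
  fixes L :: "('o, 'm) freemod" and e :: 'o and \<sigma> :: 'm
  assumes L: "free_module C L" and e: "e \<in> Obj C" and \<sigma>: "\<sigma> \<in> Aut C e"
begin

abbreviation "cc i \<equiv> fst (L ! i)"
abbreviation "nn i \<equiv> fst (snd (L ! i))"
abbreviation "rr i \<equiv> snd (snd (L ! i))"
abbreviation "coords \<equiv> fm_coords C L e"
abbreviation "U \<equiv> fm_space C L e"
abbreviation "K \<equiv> fm_relations C L e"
abbreviation "T \<equiv> fm_act C L e \<sigma>"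

lemma Li: "i < length L \<Longrightarrow> cc i \<in> Obj C \<and> is_rep C (cc i) (nn i) (rr i)"
  using L unfolding free_module_def by (metis (no_types, lifting) case_prod_beta nth_mem)

lemma coords_mem: "(i, f, k) \<in> coords \<longleftrightarrow> i < length L \<and> f \<in> Hom C (cc i) e \<and> k < nn i"
  unfolding fm_coords_def by auto

lemma fin_coords: "finite coords"
proof -
  have "coords \<subseteq> (SIGMA i:{..<length L}. SIGMA f:(\<Union>j<length L. Hom C (cc j) e). {..<Max (nn ` {..<length L})})"
  proof
    fix x assume "x \<in> coords"
    then obtain i f k where x: "x = (i, f, k)" "i < length L" "f \<in> Hom C (cc i) e" "k < nn i"
      using coords_mem by (metis prod_cases3)
    have mx: "nn i \<le> Max (nn ` {..<length L})" using x by (intro Max_ge) auto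
    show "x \<in> (SIGMA i:{..<length L}. SIGMA f:(\<Union>j<length L. Hom C (cc j) e). {..<Max (nn ` {..<length L})})"
      using x less_le_trans[OF x(4) mx] by auto
  qed
  moreover have "finite (SIGMA i:{..<length L}. SIGMA f:(\<Union>j<length L. Hom C (cc j) e). {..<Max (nn ` {..<length L})})"
    using fin_hom by (intro finite_SigmaI) auto
  ultimately show ?thesis by (rule finite_subset)
qed

lemma U_mem: "u \<in> U \<longleftrightarrow> (\<forall>x. u x \<noteq> 0 \<longrightarrow> x \<in> coords)"
  unfolding fm_space_def by auto

lemma subU: "cs.subspace U"
  unfolding cs.subspace_def
proof (intro conjI ballI allI)
  show "0 \<in> U" unfolding U_mem by simp
  show "x + y \<in> U" if "x \<in> U" "y \<in> U" for x y
    using that unfolding U_mem by (metis add.right_neutral plus_fun_apply)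
  show "cscale c x \<in> U" if "x \<in> U" for x c
    using that unfolding U_mem by simp
qed

lemma delta_U: "x \<in> coords \<Longrightarrow> delta x \<in> U"
  unfolding U_mem delta_def by auto

lemma sum_if_one: "finite A \<Longrightarrow> (\<Sum>y\<in>A. (f y::complex) * (if a = y then 1 else 0)) = (if a \<in> A then f a else 0)"
proof -
  assume A: "finite A"
  have "(\<Sum>y\<in>A. f y * (if a = y then 1 else 0)) = (\<Sum>y\<in>A. if a = y then f y else 0)"
    by (intro sum.cong) auto
  then show ?thesis using A by (simp add: sum.delta)
qed

lemma U_expand: "u \<in> U \<Longrightarrow> u = (\<Sum>x\<in>coords. cscale (u x) (delta x))"
  unfolding U_mem by (auto simp: fun_eq_iff sum_fun_apply delta_def sum_if_one fin_coords)

lemma U_span: "U \<subseteq> cs.span (delta ` coords)"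
proof
  fix u assume u: "u \<in> U"
  show "u \<in> cs.span (delta ` coords)"
    by (subst U_expand[OF u]) (intro cs.span_sum cs.span_scale cs.span_base; auto)
qed

definition gens where
  "gens = {delta (i, cmp C f g, k) - (\<Sum>j < nn i. cscale (rr i g j k) (delta (i, f, j)))
        | i f g k. i < length L \<and> f \<in> Hom C (cc i) e \<and> g \<in> Aut C (cc i) \<and> k < nn i}"

lemma K_def': "K = cs.span gens"
  unfolding fm_relations_def gens_def by simp

lemma gen_mem: "i < length L \<Longrightarrow> f \<in> Hom C (cc i) e \<Longrightarrow> g \<in> Aut C (cc i) \<Longrightarrow> k < nn i \<Longrightarrow>
   delta (i, cmp C f g, k) - (\<Sum>j < nn i. cscale (rr i g j k) (delta (i, f, j))) \<in> K"
  unfolding K_def' gens_def by (rule cs.span_base) blast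

lemma gens_U: "gens \<subseteq> U"
proof
  fix x assume "x \<in> gens"
  then obtain i f g k where x: "x = delta (i, cmp C f g, k) - (\<Sum>j < nn i. cscale (rr i g j k) (delta (i, f, j)))"
    and h: "i < length L" "f \<in> Hom C (cc i) e" "g \<in> Aut C (cc i)" "k < nn i"
    unfolding gens_def by blast
  have "cmp C f g \<in> Hom C (cc i) e" using comp_hom aut_hom h by blast
  then show "x \<in> U" unfolding x using h
    by (intro cs.subspace_diff[OF subU] cs.subspace_sum[OF subU] cs.subspace_scale[OF subU] delta_U)
       (auto simp: coords_mem)
qed

lemma subK: "cs.subspace K" unfolding K_def' by simp
lemma KU: "K \<subseteq> U" unfolding K_def' by (rule cs.span_minimal[OF gens_U subU])

lemma T_eq: "T u = (\<Sum>x\<in>coords. cscale (u x) (delta (fst x, cmp C \<sigma> (fst (snd x)), snd (snd x))))"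
  unfolding fm_act_def by (intro sum.cong refl) auto

lemma Tadd: "T (u + v) = T u + T v"
  unfolding T_eq by (simp add: fun_eq_iff sum_fun_apply sum.distrib algebra_simps)
lemma Tscale: "T (cscale a u) = cscale a (T u)"
  unfolding T_eq by (simp add: fun_eq_iff sum_fun_apply sum_distrib_left algebra_simps)
lemma Tdelta: "x \<in> coords \<Longrightarrow> T (delta x) = delta (fst x, cmp C \<sigma> (fst (snd x)), snd (snd x))"
  unfolding T_eq by (simp add: sum_delta_scale fin_coords)

lemma sigma_hom: "f \<in> Hom C c e \<Longrightarrow> cmp C \<sigma> f \<in> Hom C c e"
  using comp_hom aut_hom \<sigma> by blast

lemma TU: "T u \<in> U"
  unfolding T_eq
  by (intro cs.subspace_sum[OF subU] cs.subspace_scale[OF subU] delta_U)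
     (auto simp: coords_mem sigma_hom)

lemma T0: "T 0 = 0" using Tscale[of 0 0] by (simp add: fun_eq_iff)
lemma Tsum: "T (sum f A) = (\<Sum>a\<in>A. T (f a))"
  by (rule add_sum_hom[where f=T]) (auto simp: Tadd T0)
lemma Tdiff: "T (u - v) = T u - T v"
proof -
  have "T (u - v) + T v = T u" using Tadd[of "u - v" v] by simp
  then show ?thesis by (simp add: eq_diff_eq)
qed

lemma TK: "k \<in> K \<Longrightarrow> T k \<in> K"
  unfolding K_def'
proof (induct rule: cs.span_induct)
  case base
  show ?case
    unfolding cs.subspace_def using Tadd Tscale T0 
    by (auto intro: cs.span_add cs.span_scale cs.span_zero)
next
  case (step x)
  then obtain i f g k where x: "x = delta (i, cmp C f g, k) - (\<Sum>j < nn i. cscale (rr i g j k) (delta (i, f, j)))"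
    and h: "i < length L" "f \<in> Hom C (cc i) e" "g \<in> Aut C (cc i)" "k < nn i"
    unfolding gens_def by blast
  have fg: "cmp C f g \<in> Hom C (cc i) e" using comp_hom aut_hom h by blast
  have "T x = delta (i, cmp C \<sigma> (cmp C f g), k) - (\<Sum>j < nn i. cscale (rr i g j k) (delta (i, cmp C \<sigma> f, j)))"
    unfolding x Tdiff Tsum Tscale using h fg by (simp add: Tdelta coords_mem)
  also have "cmp C \<sigma> (cmp C f g) = cmp C (cmp C \<sigma> f) g"
    using assoc[of g "cc i" "cc i" f e \<sigma> e] h aut_hom \<sigma> by auto
  finally have "T x = delta (i, cmp C (cmp C \<sigma> f) g, k) - (\<Sum>j < nn i. cscale (rr i g j k) (delta (i, cmp C \<sigma> f, j)))" .
  moreover have "delta (i, cmp C (cmp C \<sigma> f) g, k) - (\<Sum>j < nn i. cscale (rr i g j k) (delta (i, cmp C \<sigma> f, j))) \<in> cs.span gens"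
    using gen_mem[of i "cmp C \<sigma> f" g k] h sigma_hom unfolding K_def' by blast
  ultimately show ?case by (simp only:)
qed

end

context ficL
begin

definition w :: "(nat \<times> 'm \<times> nat) \<Rightarrow> (nat \<times> 'm \<times> nat) \<Rightarrow> complex" where
  "w x y = (if fst y = fst x \<and> rp (cc (fst x)) (fst (snd y)) = fst (snd x)
            then rr (fst x) (gof (cc (fst x)) (fst (snd y))) (snd (snd x)) (snd (snd y)) else 0)"

definition psi where "psi x u = (\<Sum>y\<in>coords. u y * w x y)"

definition Idx where "Idx = (SIGMA i:{..<length L}. SIGMA r:Reps (cc i) e. {..<nn i})"

lemma fin_Idx: "finite Idx" unfolding Idx_def using fin_Reps by (intro finite_SigmaI) auto

lemma Idx_mem: "(i, r, k) \<in> Idx \<longleftrightarrow> i < length L \<and> r \<in> Hom C (cc i) e \<and> rp (cc i) r = r \<and> k < nn i"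
  unfolding Idx_def Reps_def by auto

lemma psi_add: "psi x (u + v) = psi x u + psi x v"
  unfolding psi_def by (simp add: sum.distrib algebra_simps)
lemma psi_scale: "psi x (cscale a u) = a * psi x u"
  unfolding psi_def by (simp add: sum_distrib_left algebra_simps)
lemma psi_delta: "y \<in> coords \<Longrightarrow> psi x (delta y) = w x y"
  unfolding psi_def by (simp add: sum_delta_mult fin_coords)
lemma psi0: "psi x 0 = 0" unfolding psi_def by simp
lemma psi_sum: "psi x (sum f A) = (\<Sum>a\<in>A. psi x (f a))"
  by (rule add_sum_hom[where f="psi x"]) (auto simp: psi_add psi0)
lemma psi_diff: "psi x (u - v) = psi x u - psi x v"
  unfolding psi_def by (simp add: sum_subtractf algebra_simps)

lemma vecU: "x \<in> Idx \<Longrightarrow> delta x \<in> U"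
  by (cases x) (auto simp: Idx_mem coords_mem intro!: delta_U)

lemma rep_mult: "i < length L \<Longrightarrow> g \<in> Aut C (cc i) \<Longrightarrow> h \<in> Aut C (cc i) \<Longrightarrow> a < nn i \<Longrightarrow> b < nn i \<Longrightarrow>
   rr i (cmp C g h) a b = (\<Sum>k<nn i. rr i g a k * rr i h k b)"
  using Li unfolding is_rep_def by blast

lemma rep_id: "i < length L \<Longrightarrow> a < nn i \<Longrightarrow> b < nn i \<Longrightarrow> rr i (idm C (cc i)) a b = (if a = b then 1 else 0)"
  using Li unfolding is_rep_def by blast

lemma pK: assumes x: "x \<in> Idx" and k: "k \<in> K" shows "psi x k = 0"
  using k unfolding K_def'
proof (induct rule: cs.span_induct)
  case base
  show ?case unfolding cs.subspace_def using psi_add psi_scale psi0 by auto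
next
  case (step z)
  then obtain i f g k where z: "z = delta (i, cmp C f g, k) - (\<Sum>j < nn i. cscale (rr i g j k) (delta (i, f, j)))"
    and h: "i < length L" "f \<in> Hom C (cc i) e" "g \<in> Aut C (cc i)" "k < nn i"
    unfolding gens_def by blast
  obtain i0 r k0 where x0: "x = (i0, r, k0)" by (metis prod_cases3)
  have fg: "cmp C f g \<in> Hom C (cc i) e" using comp_hom aut_hom h by blast
  have "psi x z = w x (i, cmp C f g, k) - (\<Sum>j < nn i. rr i g j k * w x (i, f, j))"
    unfolding z psi_diff psi_sum psi_scale using h fg by (simp add: psi_delta coords_mem)
  also have "\<dots> = 0"
  proof (cases "i = i0 \<and> rp (cc i) f = r")
    case True
    have k0: "k0 < nn i" using x x0 True Idx_mem by auto
    have "w x (i, cmp C f g, k) = rr i (cmp C (gof (cc i) f) g) k0 k"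
      using True x0 rp_comp[OF h(2,3)] gof_comp[OF h(2,3)] unfolding w_def by auto
    also have "\<dots> = (\<Sum>j<nn i. rr i (gof (cc i) f) k0 j * rr i g j k)"
      using rep_mult[OF h(1) gof(1)[OF h(2)] h(3) k0 h(4)] .
    also have "\<dots> = (\<Sum>j < nn i. rr i g j k * w x (i, f, j))"
      using True x0 unfolding w_def by (intro sum.cong refl) auto
    finally show ?thesis by simp
  next
    case False
    then have "w x (i, cmp C f g, k) = 0" "\<And>j. w x (i, f, j) = 0"
      using x0 rp_comp[OF h(2,3)] unfolding w_def by auto
    then show ?thesis by simp
  qed
  finally show ?case .
qed

lemma D_K: assumes y: "y \<in> coords" shows "delta y - (\<Sum>x\<in>Idx. cscale (psi x (delta y)) (delta x)) \<in> K"
proof -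
  obtain i f j where y0: "y = (i, f, j)" by (metis prod_cases3)
  have h: "i < length L" "f \<in> Hom C (cc i) e" "j < nn i" using y y0 coords_mem by auto
  let ?r = "rp (cc i) f"
  have rR: "?r \<in> Hom C (cc i) e" "rp (cc i) ?r = ?r" using rp_hom[OF h(2)] rp_rp[OF h(2)] by auto
  have "(\<Sum>x\<in>Idx. cscale (psi x (delta y)) (delta x)) = (\<Sum>x\<in>Idx. cscale (w x y) (delta x))"
    using y by (simp add: psi_delta)
  also have "\<dots> = (\<Sum>x\<in>(\<lambda>k. (i, ?r, k)) ` {..<nn i}. cscale (w x y) (delta x))"
  proof (rule sum.mono_neutral_cong_right[OF fin_Idx])
    show "(\<lambda>k. (i, ?r, k)) ` {..<nn i} \<subseteq> Idx" using h rR by (auto simp: Idx_mem)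
    show "\<forall>x\<in>Idx - (\<lambda>k. (i, ?r, k)) ` {..<nn i}. cscale (w x y) (delta x) = 0"
    proof
      fix x assume xx: "x \<in> Idx - (\<lambda>k. (i, ?r, k)) ` {..<nn i}"
      obtain i' r' k' where x0: "x = (i', r', k')" by (metis prod_cases3)
      have "w x y = 0"
      proof (rule ccontr)
        assume "w x y \<noteq> 0"
        then have "i' = i" "r' = ?r" using x0 y0 unfolding w_def by (auto split: if_splits)
        then show False using xx x0 Idx_mem by auto
      qed
      then show "cscale (w x y) (delta x) = 0" by (simp add: fun_eq_iff)
    qed
  qed auto
  also have "\<dots> = (\<Sum>k<nn i. cscale (w (i, ?r, k) y) (delta (i, ?r, k)))"
    by (subst sum.reindex) (auto simp: inj_on_def)
  also have "\<dots> = (\<Sum>k<nn i. cscale (rr i (gof (cc i) f) k j) (delta (i, ?r, k)))"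
    using y0 unfolding w_def by simp
  finally have eq: "(\<Sum>x\<in>Idx. cscale (psi x (delta y)) (delta x)) = (\<Sum>k<nn i. cscale (rr i (gof (cc i) f) k j) (delta (i, ?r, k)))" .
  have "delta (i, cmp C ?r (gof (cc i) f), j) - (\<Sum>k<nn i. cscale (rr i (gof (cc i) f) k j) (delta (i, ?r, k))) \<in> K"
    by (rule gen_mem) (use h rR gof[OF h(2)] in auto)
  then show ?thesis using eq y0 gof(2)[OF h(2)] by (simp only:)
qed

lemma decomp: assumes u: "u \<in> U" shows "u - (\<Sum>x\<in>Idx. cscale (psi x u) (delta x)) \<in> K"
proof -
  define D where "D y = delta y - (\<Sum>x\<in>Idx. cscale (psi x (delta y)) (delta x))" for y
  have "(\<Sum>y\<in>coords. cscale (u y) (D y)) \<in> K"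
    using D_K unfolding D_def by (intro cs.subspace_sum[OF subK] cs.subspace_scale[OF subK]) auto
  moreover have "(\<Sum>y\<in>coords. cscale (u y) (D y)) = u - (\<Sum>x\<in>Idx. cscale (psi x u) (delta x))"
  proof -
    have pu: "psi x u = (\<Sum>y\<in>coords. u y * psi x (delta y))" for x
      unfolding psi_def[of x u] by (intro sum.cong refl) (simp add: psi_delta)
    have "u = (\<Sum>y\<in>coords. cscale (u y) (delta y))" by (rule U_expand[OF u])
    then show ?thesis
      unfolding D_def pu
      by (simp add: fun_eq_iff sum_fun_apply sum_distrib_left sum_distrib_right sum_subtractf
          algebra_simps sum.swap[of _ Idx] cong: sum.cong)
  qed
  ultimately show ?thesis by simp
qed

lemma chi_formula:
  "chi_free C L e \<sigma> = (\<Sum>i<length L. \<Sum>r\<in>Reps (cc i) e.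
      if rp (cc i) (cmp C \<sigma> r) = r then trc (nn i) (rr i) (gof (cc i) (cmp C \<sigma> r)) else 0)"
proof -
  have "chi_free C L e \<sigma> = quot_trace U K T" unfolding chi_free_def using e \<sigma> by simp
  also have "\<dots> = (\<Sum>x\<in>Idx. psi x (T (delta x)))"
  proof (rule quot_trace_eq[OF subU subK KU _ U_span TU TK Tadd Tscale fin_Idx vecU psi_add psi_scale pK decomp])
    show "finite (delta ` coords)" using fin_coords by simp
  qed
  also have "\<dots> = (\<Sum>(i, r, k)\<in>Idx. if rp (cc i) (cmp C \<sigma> r) = r then rr i (gof (cc i) (cmp C \<sigma> r)) k k else 0)"
  proof (intro sum.cong refl)
    fix x assume x: "x \<in> Idx"
    obtain i r k where x0: "x = (i, r, k)" by (metis prod_cases3)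
    have h: "i < length L" "r \<in> Hom C (cc i) e" "k < nn i" using x x0 Idx_mem by auto
    have "T (delta x) = delta (i, cmp C \<sigma> r, k)" using Tdelta[of x] x0 h by (simp add: coords_mem)
    then have "psi x (T (delta x)) = w x (i, cmp C \<sigma> r, k)"
      using psi_delta h sigma_hom by (simp add: coords_mem)
    then show "psi x (T (delta x)) = (case x of (i, r, k) \<Rightarrow> if rp (cc i) (cmp C \<sigma> r) = r then rr i (gof (cc i) (cmp C \<sigma> r)) k k else 0)"
      using x0 unfolding w_def by simp
  qed
  also have "\<dots> = (\<Sum>i<length L. \<Sum>r\<in>Reps (cc i) e.
      if rp (cc i) (cmp C \<sigma> r) = r then trc (nn i) (rr i) (gof (cc i) (cmp C \<sigma> r)) else 0)"
    unfolding Idx_def trc_def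
    by (simp add: sum.Sigma[symmetric] fin_Reps) (intro sum.cong refl, auto)
  finally show ?thesis .
qed

end

context fic
begin

abbreviation "iv c g \<equiv> ainv c g"

lemma aas: "g \<in> Aut C c \<Longrightarrow> h \<in> Aut C c \<Longrightarrow> k \<in> Aut C c \<Longrightarrow> cmp C g (cmp C h k) = cmp C (cmp C g h) k"
  using assoc[of k c c h c g c] aut_hom by blast
lemma has: "f \<in> Hom C c e \<Longrightarrow> g \<in> Aut C c \<Longrightarrow> h \<in> Aut C c \<Longrightarrow> cmp C f (cmp C g h) = cmp C (cmp C f g) h"
  using assoc[of h c c g c f e] aut_hom by blast
lemma sas: "s \<in> Aut C e \<Longrightarrow> f \<in> Hom C c e \<Longrightarrow> g \<in> Aut C c \<Longrightarrow> cmp C s (cmp C f g) = cmp C (cmp C s f) g"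
  using assoc[of g c c f e s e] aut_hom by blast
lemma hcomp: "f \<in> Hom C c e \<Longrightarrow> g \<in> Aut C c \<Longrightarrow> cmp C f g \<in> Hom C c e"
  using comp_hom aut_hom by blast
lemma scomp: "s \<in> Aut C e \<Longrightarrow> f \<in> Hom C c e \<Longrightarrow> cmp C s f \<in> Hom C c e"
  using comp_hom aut_hom by blast
lemma aidl: "g \<in> Aut C c \<Longrightarrow> cmp C (idm C c) g = g" using id_left aut_hom by blast
lemma aidr: "g \<in> Aut C c \<Longrightarrow> cmp C g (idm C c) = g" using id_right aut_hom by blast
lemma hidr: "f \<in> Hom C c e \<Longrightarrow> cmp C f (idm C c) = f" using id_right by blast

definition cj where "cj c a b \<longleftrightarrow> (\<exists>\<tau>\<in>Aut C c. cmp C a \<tau> = cmp C \<tau> b)"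
definition cls where "cls c b = {a \<in> Aut C c. cj c a b}"

lemma conj_class_cls: "conj_class C c \<mu> \<longleftrightarrow> (\<exists>s\<in>Aut C c. \<mu> = cls c s)"
  unfolding conj_class_def cls_def cj_def by simp

lemma cj_refl: "a \<in> Aut C c \<Longrightarrow> cj c a a"
  unfolding cj_def using id_aut aut_obj aidl aidr by metis

lemma cj_sym: assumes a: "a \<in> Aut C c" and b: "b \<in> Aut C c" and cj: "cj c a b" shows "cj c b a"
proof -
  obtain \<tau> where t: "\<tau> \<in> Aut C c" "cmp C a \<tau> = cmp C \<tau> b" using cj unfolding cj_def by auto
  note iv = ainv[OF t(1)]
  have "cmp C (iv c \<tau>) a = cmp C (iv c \<tau>) (cmp C a (cmp C \<tau> (iv c \<tau>)))" using iv aidr a by simp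
  also have "\<dots> = cmp C (iv c \<tau>) (cmp C (cmp C a \<tau>) (iv c \<tau>))" using aas[OF a t(1) iv(1)] by simp
  also have "\<dots> = cmp C (iv c \<tau>) (cmp C \<tau> (cmp C b (iv c \<tau>)))" using t(2) aas[OF t(1) b iv(1)] by simp
  also have "\<dots> = cmp C (cmp C (iv c \<tau>) \<tau>) (cmp C b (iv c \<tau>))"
    using aas[OF iv(1) t(1) comp_aut[OF b iv(1)]] by simp
  also have "\<dots> = cmp C b (iv c \<tau>)" using iv aidl comp_aut[OF b iv(1)] by simp
  finally show ?thesis unfolding cj_def using iv(1) by metis
qed

lemma cj_trans: assumes a: "a \<in> Aut C c" and b: "b \<in> Aut C c" and d: "d \<in> Aut C c"
  and ab: "cj c a b" and bd: "cj c b d" shows "cj c a d"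
proof -
  obtain \<tau> where t: "\<tau> \<in> Aut C c" "cmp C a \<tau> = cmp C \<tau> b" using ab unfolding cj_def by auto
  obtain \<tau>' where t': "\<tau>' \<in> Aut C c" "cmp C b \<tau>' = cmp C \<tau>' d" using bd unfolding cj_def by auto
  have "cmp C a (cmp C \<tau> \<tau>') = cmp C (cmp C a \<tau>) \<tau>'" using aas[OF a t(1) t'(1)] .
  also have "\<dots> = cmp C \<tau> (cmp C b \<tau>')" using t(2) aas[OF t(1) b t'(1)] by simp
  also have "\<dots> = cmp C (cmp C \<tau> \<tau>') d" using t'(2) aas[OF t(1) t'(1) d] by simp
  finally show ?thesis unfolding cj_def using comp_aut[OF t(1) t'(1)] by blast
qed

lemma cls_sub: "cls c b \<subseteq> Aut C c" unfolding cls_def by auto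
lemma cls_self: "b \<in> Aut C c \<Longrightarrow> b \<in> cls c b" unfolding cls_def using cj_refl by auto
lemma cls_eq: assumes "s \<in> Aut C c" "a \<in> cls c s" shows "cls c a = cls c s"
  using assms cj_trans cj_sym unfolding cls_def by blast

lemma cls_conj: assumes s: "s \<in> Aut C c" and a: "a \<in> cls c s" and b: "b \<in> Aut C c" and ba: "cj c b a"
  shows "b \<in> cls c s"
  using assms cj_trans unfolding cls_def by blast

definition CL where "CL c = {\<mu>. conj_class C c \<mu>}"
lemma fin_CL: "finite (CL c)"
proof -
  have "CL c \<subseteq> Pow (Aut C c)" unfolding CL_def conj_class_cls using cls_sub by auto
  then show ?thesis using fin_aut finite_subset by blast
qed

definition pick where "pick \<mu> = (SOME x. x \<in> \<mu>)"
lemma pick: assumes "\<mu> \<in> CL c" shows "pick \<mu> \<in> \<mu>"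
proof -
  have "conj_class C c \<mu>" using assms by (simp add: CL_def)
  then obtain s where s: "s \<in> Aut C c" "\<mu> = cls c s" unfolding conj_class_cls by blast
  then have "s \<in> \<mu>" using cls_self by simp
  then show ?thesis unfolding pick_def by (rule someI)
qed

lemma CL_unique: assumes a: "a \<in> Aut C c" shows "{\<mu> \<in> CL c. a \<in> \<mu>} = {cls c a}"
proof -
  have h1: "\<mu> = cls c a" if "\<mu> \<in> CL c" "a \<in> \<mu>" for \<mu>
  proof -
    have "conj_class C c \<mu>" using that by (simp add: CL_def)
    then obtain s where s: "s \<in> Aut C c" "\<mu> = cls c s" unfolding conj_class_cls by blast
    then show ?thesis using cls_eq[OF s(1)] that by simp
  qed
  have h2: "cls c a \<in> CL c" unfolding CL_def conj_class_cls using a by blast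
  have h3: "a \<in> cls c a" using cls_self[OF a] .
  show ?thesis
  proof (rule Set.set_eqI)
    fix \<mu> show "\<mu> \<in> {\<mu> \<in> CL c. a \<in> \<mu>} \<longleftrightarrow> \<mu> \<in> {cls c a}"
      using h1 h2 h3 by blast
  qed
qed

lemma BX:
  assumes s0: "s0 \<in> Aut C c" and \<sigma>: "\<sigma> \<in> Aut C e"
  shows "binomX C c (cls c s0) e \<sigma> =
         card {r\<in>Reps c e. rp c (cmp C \<sigma> r) = r \<and> gof c (cmp C \<sigma> r) \<in> cls c s0}"
proof -
  let ?\<mu> = "cls c s0"
  define R where "R = {r\<in>Reps c e. rp c (cmp C \<sigma> r) = r \<and> gof c (cmp C \<sigma> r) \<in> ?\<mu>}"
  have S: "{orbit_cls C c f | f. f \<in> Hom C c e \<and> (\<exists>\<psi>\<in>?\<mu>. cmp C \<sigma> f = cmp C f \<psi>)} = Orb c ` R"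
  proof
    show "Orb c ` R \<subseteq> {orbit_cls C c f | f. f \<in> Hom C c e \<and> (\<exists>\<psi>\<in>?\<mu>. cmp C \<sigma> f = cmp C f \<psi>)}"
    proof
      fix x assume "x \<in> Orb c ` R"
      then obtain r where r: "r \<in> R" "x = Orb c r" by auto
      have rh: "r \<in> Hom C c e" "rp c (cmp C \<sigma> r) = r" "gof c (cmp C \<sigma> r) \<in> ?\<mu>"
        using r unfolding R_def Reps_def by auto
      have "cmp C \<sigma> r = cmp C r (gof c (cmp C \<sigma> r))"
        using gof(2)[OF scomp[OF \<sigma> rh(1)]] rh(2) by simp
      then show "x \<in> {orbit_cls C c f | f. f \<in> Hom C c e \<and> (\<exists>\<psi>\<in>?\<mu>. cmp C \<sigma> f = cmp C f \<psi>)}"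
        using r rh by blast
    qed
  next
    show "{orbit_cls C c f | f. f \<in> Hom C c e \<and> (\<exists>\<psi>\<in>?\<mu>. cmp C \<sigma> f = cmp C f \<psi>)} \<subseteq> Orb c ` R"
    proof
      fix x assume "x \<in> {orbit_cls C c f | f. f \<in> Hom C c e \<and> (\<exists>\<psi>\<in>?\<mu>. cmp C \<sigma> f = cmp C f \<psi>)}"
      then obtain f \<psi> where x: "x = Orb c f" and f: "f \<in> Hom C c e" and \<psi>: "\<psi> \<in> ?\<mu>"
        and eq: "cmp C \<sigma> f = cmp C f \<psi>" by blast
      have \<psi>A: "\<psi> \<in> Aut C c" using \<psi> cls_sub by auto
      define r where "r = rp c f"
      define g where "g = gof c f"
      have rH: "r \<in> Hom C c e" using rp_hom[OF f] r_def by simp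
      have gA: "g \<in> Aut C c" and frg: "cmp C r g = f" using gof[OF f] unfolding r_def g_def by auto
      note iv = ainv[OF gA]
      have r_eq: "cmp C f (iv c g) = r"
        using has[OF rH gA iv(1)] frg iv(3) hidr[OF rH] by simp
      define h where "h = cmp C g (cmp C \<psi> (iv c g))"
      have hA: "h \<in> Aut C c" unfolding h_def using comp_aut gA \<psi>A iv(1) by blast
      have "cmp C \<sigma> r = cmp C \<sigma> (cmp C f (iv c g))" using r_eq by simp
      also have "\<dots> = cmp C (cmp C f \<psi>) (iv c g)" using sas[OF \<sigma> f iv(1)] eq by simp
      also have "\<dots> = cmp C f (cmp C \<psi> (iv c g))" using has[OF f \<psi>A iv(1)] by simp
      also have "\<dots> = cmp C r h" unfolding h_def using has[OF rH gA comp_aut[OF \<psi>A iv(1)]] frg by simp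
      finally have sr: "cmp C \<sigma> r = cmp C r h" .
      have rr: "rp c r = r" unfolding r_def using rp_rp[OF f] .
      have "rp c (cmp C \<sigma> r) = rp c r" unfolding sr using rp_comp[OF rH hA] .
      hence rps: "rp c (cmp C \<sigma> r) = r" using rr by simp
      have gs: "gof c (cmp C \<sigma> r) = h"
        by (rule gof_uniq[OF scomp[OF \<sigma> rH] hA]) (subst rps, rule sr[symmetric])
      have "cmp C h g = cmp C g \<psi>"
      proof -
        have "cmp C h g = cmp C g (cmp C (cmp C \<psi> (iv c g)) g)"
          unfolding h_def using aas[OF gA comp_aut[OF \<psi>A iv(1)] gA] by simp
        also have "cmp C (cmp C \<psi> (iv c g)) g = \<psi>"
          using aas[OF \<psi>A iv(1) gA, symmetric] iv(2) aidr[OF \<psi>A] by simp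
        finally show ?thesis .
      qed
      hence "cj c h \<psi>" unfolding cj_def using gA by blast
      hence "h \<in> ?\<mu>" using cls_conj[OF s0 \<psi> hA] by simp
      hence "r \<in> R" unfolding R_def Reps_def using rH rr rps gs by auto
      moreover have "x = Orb c r" unfolding x r_def using O_rp[OF f] by simp
      ultimately show "x \<in> Orb c ` R" by blast
    qed
  qed
  have inj: "inj_on (Orb c) R"
  proof
    fix r r' assume "r \<in> R" "r' \<in> R" "Orb c r = Orb c r'"
    then have "rp c r = rp c r'" "rp c r = r" "rp c r' = r'" unfolding rp_def R_def Reps_def by auto
    then show "r = r'" by simp
  qed
  have "binomX C c ?\<mu> e \<sigma> = card (Orb c ` R)" unfolding binomX_def S ..
  also have "\<dots> = card R" by (rule card_image[OF inj])
  finally show ?thesis unfolding R_def .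
qed

lemma EXP:
  fixes \<chi> :: "'m \<Rightarrow> complex"
  assumes \<sigma>: "\<sigma> \<in> Aut C e"
    and cf: "\<And>a b. a \<in> Aut C c \<Longrightarrow> b \<in> Aut C c \<Longrightarrow> cj c a b \<Longrightarrow> \<chi> a = \<chi> b"
  shows "(\<Sum>r\<in>Reps c e. if rp c (cmp C \<sigma> r) = r then \<chi> (gof c (cmp C \<sigma> r)) else 0)
       = (\<Sum>\<mu>\<in>CL c. \<chi> (pick \<mu>) * of_nat (binomX C c \<mu> e \<sigma>))"
proof -
  have bx: "of_nat (binomX C c \<mu> e \<sigma>) = (\<Sum>r\<in>Reps c e. if rp c (cmp C \<sigma> r) = r \<and> gof c (cmp C \<sigma> r) \<in> \<mu> then 1 else (0::complex))"
    if "\<mu> \<in> CL c" for \<mu>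
  proof -
    have "conj_class C c \<mu>" using that by (simp add: CL_def)
    then obtain s0 where s0: "s0 \<in> Aut C c" "\<mu> = cls c s0" unfolding conj_class_cls by blast
    show ?thesis unfolding s0(2) BX[OF s0(1) \<sigma>] using fin_Reps
      by (simp add: sum.If_cases Int_def)
  qed
  have "(\<Sum>\<mu>\<in>CL c. \<chi> (pick \<mu>) * of_nat (binomX C c \<mu> e \<sigma>))
     = (\<Sum>\<mu>\<in>CL c. \<Sum>r\<in>Reps c e. if rp c (cmp C \<sigma> r) = r \<and> gof c (cmp C \<sigma> r) \<in> \<mu> then \<chi> (pick \<mu>) else 0)"
  proof (intro sum.cong refl)
    fix \<mu> assume m: "\<mu> \<in> CL c"
    show "\<chi> (pick \<mu>) * of_nat (binomX C c \<mu> e \<sigma>) = (\<Sum>r\<in>Reps c e. if rp c (cmp C \<sigma> r) = r \<and> gof c (cmp C \<sigma> r) \<in> \<mu> then \<chi> (pick \<mu>) else 0)"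
      by (simp only: bx[OF m] sum_distrib_left) (intro sum.cong refl, simp)
  qed
  also have "\<dots> = (\<Sum>r\<in>Reps c e. \<Sum>\<mu>\<in>CL c. if rp c (cmp C \<sigma> r) = r \<and> gof c (cmp C \<sigma> r) \<in> \<mu> then \<chi> (pick \<mu>) else 0)"
    by (rule sum.swap)
  also have "\<dots> = (\<Sum>r\<in>Reps c e. if rp c (cmp C \<sigma> r) = r then \<chi> (gof c (cmp C \<sigma> r)) else 0)"
  proof (intro sum.cong refl)
    fix r assume r: "r \<in> Reps c e"
    show "(\<Sum>\<mu>\<in>CL c. if rp c (cmp C \<sigma> r) = r \<and> gof c (cmp C \<sigma> r) \<in> \<mu> then \<chi> (pick \<mu>) else 0) =
          (if rp c (cmp C \<sigma> r) = r then \<chi> (gof c (cmp C \<sigma> r)) else 0)"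
    proof (cases "rp c (cmp C \<sigma> r) = r")
      case True
      let ?a = "gof c (cmp C \<sigma> r)"
      have rH: "r \<in> Hom C c e" using r unfolding Reps_def by auto
      have aA: "?a \<in> Aut C c" using gof(1)[OF scomp[OF \<sigma> rH]] .
      have "(\<Sum>\<mu>\<in>CL c. if ?a \<in> \<mu> then \<chi> (pick \<mu>) else 0) = (\<Sum>\<mu>\<in>{\<mu>\<in>CL c. ?a \<in> \<mu>}. \<chi> (pick \<mu>))"
        using fin_CL by (simp add: sum.inter_filter)
      also have "\<dots> = \<chi> (pick (cls c ?a))" unfolding CL_unique[OF aA] by simp
      also have "\<dots> = \<chi> ?a"
      proof -
        have cl: "cls c ?a \<in> CL c" using CL_unique[OF aA] by auto
        have p: "pick (cls c ?a) \<in> cls c ?a" using pick[OF cl] .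
        then show ?thesis using cf[of "pick (cls c ?a)" ?a] aA unfolding cls_def by auto
      qed
      finally show ?thesis using True by simp
    qed simp
  qed
  finally show ?thesis by simp
qed

lemma trc_comm:
  assumes rep: "is_rep C c n \<rho>" and x: "x \<in> Aut C c" and y: "y \<in> Aut C c"
  shows "trc n \<rho> (cmp C x y) = trc n \<rho> (cmp C y x)"
proof -
  have m: "\<rho> (cmp C g h) i j = (\<Sum>k<n. \<rho> g i k * \<rho> h k j)" if "g \<in> Aut C c" "h \<in> Aut C c" "i < n" "j < n" for g h i j
    using rep that unfolding is_rep_def by blast
  have "trc n \<rho> (cmp C x y) = (\<Sum>i<n. \<Sum>k<n. \<rho> x i k * \<rho> y k i)"
    unfolding trc_def by (intro sum.cong refl) (rule m[OF x y]; simp)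
  also have "\<dots> = (\<Sum>k<n. \<Sum>i<n. \<rho> x i k * \<rho> y k i)" by (rule sum.swap)
  also have "\<dots> = (\<Sum>k<n. \<Sum>i<n. \<rho> y k i * \<rho> x i k)"
    by (intro sum.cong refl) (rule mult.commute)
  also have "\<dots> = trc n \<rho> (cmp C y x)"
    unfolding trc_def by (intro sum.cong refl) (rule m[OF y x, symmetric]; simp)
  finally show ?thesis .
qed

lemma trc_cf:
  assumes rep: "is_rep C c n \<rho>" and a: "a \<in> Aut C c" and b: "b \<in> Aut C c" and ab: "cj c a b"
  shows "trc n \<rho> a = trc n \<rho> b"
proof -
  obtain \<tau> where t: "\<tau> \<in> Aut C c" "cmp C a \<tau> = cmp C \<tau> b" using ab unfolding cj_def by auto
  note iv = ainv[OF t(1)]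
  have "b = cmp C (iv c \<tau>) (cmp C a \<tau>)"
    using t(2) aas[OF iv(1) t(1) b] iv(2) aidl[OF b] by simp
  then have "trc n \<rho> b = trc n \<rho> (cmp C (cmp C a \<tau>) (iv c \<tau>))"
    using trc_comm[OF rep iv(1) comp_aut[OF a t(1)]] by simp
  also have "cmp C (cmp C a \<tau>) (iv c \<tau>) = a"
    using aas[OF a t(1) iv(1), symmetric] iv(3) aidr[OF a] by simp
  finally show ?thesis by (rule sym)
qed

end

lemma sum_list_sum_swap:
  "(\<Sum>x\<leftarrow>W. (\<Sum>r\<in>R. h x r)) = (\<Sum>r\<in>R. (\<Sum>x\<leftarrow>W. h x r :: complex))"
  by (induct W) (auto simp: sum.distrib)

context fic
begin

definition Gc where "Gc c = \<lparr>carrier = Aut C c, mult = cmp C, one = idm C c\<rparr>"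

lemma Gc_group: assumes c: "c \<in> Obj C" shows "group (Gc c)"
proof (rule groupI)
  show "x \<otimes>\<^bsub>Gc c\<^esub> y \<in> carrier (Gc c)" if "x \<in> carrier (Gc c)" "y \<in> carrier (Gc c)" for x y
    using that comp_aut unfolding Gc_def by simp
  show "\<one>\<^bsub>Gc c\<^esub> \<in> carrier (Gc c)" using id_aut c unfolding Gc_def by simp
  show "x \<otimes>\<^bsub>Gc c\<^esub> y \<otimes>\<^bsub>Gc c\<^esub> z = x \<otimes>\<^bsub>Gc c\<^esub> (y \<otimes>\<^bsub>Gc c\<^esub> z)"
    if "x \<in> carrier (Gc c)" "y \<in> carrier (Gc c)" "z \<in> carrier (Gc c)" for x y z
    using that aas unfolding Gc_def by simp
  show "\<one>\<^bsub>Gc c\<^esub> \<otimes>\<^bsub>Gc c\<^esub> x = x" if "x \<in> carrier (Gc c)" for x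
    using that aidl unfolding Gc_def by simp
  show "\<exists>y\<in>carrier (Gc c). y \<otimes>\<^bsub>Gc c\<^esub> x = \<one>\<^bsub>Gc c\<^esub>" if "x \<in> carrier (Gc c)" for x
  proof -
    have x: "x \<in> Aut C c" using that by (simp add: Gc_def)
    show ?thesis unfolding Gc_def using ainv[OF x] by auto
  qed
qed

lemma RTc: assumes s: "s \<in> Aut C c"
  shows "\<exists>W :: (complex \<times> nat \<times> ('m \<Rightarrow> nat \<Rightarrow> nat \<Rightarrow> complex)) list.
     (\<forall>(a, n, \<rho>) \<in> set W. is_rep C c n \<rho>) \<and>
     (\<forall>g\<in>Aut C c. (\<Sum>(a, n, \<rho>) \<leftarrow> W. a * trc n \<rho> g) = (if g \<in> cls c s then 1 else 0))"
proof -
  have c: "c \<in> Obj C" using aut_obj s by blast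
  interpret fgrp "Gc c" s
    by (rule fgrp.intro[OF Gc_group[OF c]]) (unfold_locales, auto simp: Gc_def fin_aut s)
  obtain W :: "(complex \<times> nat \<times> ('m \<Rightarrow> nat \<Rightarrow> nat \<Rightarrow> complex)) list" where
    W1: "\<forall>(a, n, \<rho>) \<in> set W. (\<forall>i<n. \<forall>j<n. \<rho> \<one>\<^bsub>Gc c\<^esub> i j = (if i = j then 1 else 0)) \<and>
        (\<forall>g\<in>carrier (Gc c). \<forall>h\<in>carrier (Gc c). \<forall>i<n. \<forall>j<n. \<rho> (g \<otimes>\<^bsub>Gc c\<^esub> h) i j = (\<Sum>k<n. \<rho> g i k * \<rho> h k j))"
    and W2: "\<forall>g\<in>carrier (Gc c). (\<Sum>(a, n, \<rho>) \<leftarrow> W. a * (\<Sum>k<n. \<rho> g k k)) =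
        (if \<exists>\<tau>\<in>carrier (Gc c). g \<otimes>\<^bsub>Gc c\<^esub> \<tau> = \<tau> \<otimes>\<^bsub>Gc c\<^esub> s then 1 else 0)"
    using RT_exists by blast
  show ?thesis
  proof (intro exI conjI)
    show "\<forall>(a, n, \<rho>) \<in> set W. is_rep C c n \<rho>"
      using W1 unfolding is_rep_def Gc_def by auto
    show "\<forall>g\<in>Aut C c. (\<Sum>(a, n, \<rho>) \<leftarrow> W. a * trc n \<rho> g) = (if g \<in> cls c s then 1 else 0)"
      using W2 unfolding trc_def Gc_def cls_def cj_def by auto
  qed
qed

end

context fic
begin

lemma chi_free_eq:
  assumes L: "free_module C L" and e: "e \<in> Obj C" and \<sigma>: "\<sigma> \<in> Aut C e"
  shows "chi_free C L e \<sigma> = (\<Sum>i<length L. \<Sum>\<mu>\<in>CL (fst (L ! i)).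
            trc (fst (snd (L ! i))) (snd (snd (L ! i))) (pick \<mu>) * of_nat (binomX C (fst (L ! i)) \<mu> e \<sigma>))"
proof -
  interpret ficL C L e \<sigma> using L e \<sigma> by unfold_locales auto
  show ?thesis unfolding chi_formula
  proof (intro sum.cong refl)
    fix i assume i: "i \<in> {..<length L}"
    show "(\<Sum>r\<in>Reps (cc i) e. if rp (cc i) (cmp C \<sigma> r) = r then trc (nn i) (rr i) (gof (cc i) (cmp C \<sigma> r)) else 0) =
          (\<Sum>\<mu>\<in>CL (cc i). trc (nn i) (rr i) (pick \<mu>) * of_nat (binomX C (cc i) \<mu> e \<sigma>))"
      using Li[of i] i by (intro EXP[OF \<sigma>] trc_cf) auto
  qed
qed

lemma chi_single:
  assumes c: "c \<in> Obj C" and rep: "is_rep C c n \<rho>" and e: "e \<in> Obj C" and \<sigma>: "\<sigma> \<in> Aut C e"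
  shows "chi_free C [(c, n, \<rho>)] e \<sigma> =
     (\<Sum>r\<in>Reps c e. if rp c (cmp C \<sigma> r) = r then trc n \<rho> (gof c (cmp C \<sigma> r)) else 0)"
proof -
  interpret ficL C "[(c, n, \<rho>)]" e \<sigma> using c rep e \<sigma> by unfold_locales (auto simp: free_module_def)
  have s1: "\<And>F::nat\<Rightarrow>complex. (\<Sum>i<length [(c, n, \<rho>)]. F i) = F 0" by simp
  show ?thesis unfolding chi_formula s1 by (simp cong: if_cong)
qed

definition clist where "clist c = (SOME xs. set xs = CL c \<and> distinct xs)"
lemma clist: "set (clist c) = CL c" "distinct (clist c)"
  unfolding clist_def using someI_ex[OF finite_distinct_list[OF fin_CL]] by auto

definition Pof where "Pof c n \<rho> = map (\<lambda>\<mu>. (trc n \<rho> (pick \<mu>), c, \<mu>)) (clist c)"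

lemma Pof_cp: "char_poly C (Pof c n \<rho>)" if "c \<in> Obj C"
  using that clist unfolding char_poly_def Pof_def CL_def by auto

lemma Pof_deg: "obj_le C c d \<Longrightarrow> cp_deg_le C (Pof c n \<rho>) d"
  unfolding cp_deg_le_def Pof_def by auto

lemma Pof_fun: "e \<in> Obj C \<Longrightarrow> \<sigma> \<in> Aut C e \<Longrightarrow>
  cp_fun C (Pof c n \<rho>) e \<sigma> = (\<Sum>\<mu>\<in>CL c. trc n \<rho> (pick \<mu>) * of_nat (binomX C c \<mu> e \<sigma>))"
  unfolding cp_fun_def Pof_def
  by (simp add: comp_def sum_list_distinct_conv_sum_set[OF clist(2), unfolded clist(1)])

lemma cp_fun_out: "\<not> (e \<in> Obj C \<and> \<sigma> \<in> Aut C e) \<Longrightarrow> cp_fun C P e \<sigma> = 0"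
  unfolding cp_fun_def by auto
lemma chi_free_out: "\<not> (e \<in> Obj C \<and> \<sigma> \<in> Aut C e) \<Longrightarrow> chi_free C L e \<sigma> = 0"
  unfolding chi_free_def by auto

lemma cp_fun_concat: "cp_fun C (concat Ps) e \<sigma> = (\<Sum>P\<leftarrow>Ps. cp_fun C P e \<sigma>)"
  unfolding cp_fun_def by (induct Ps) auto

lemma cp_fun_scale: "cp_fun C (map (\<lambda>(b, c, \<mu>). (a * b, c, \<mu>)) P) e \<sigma> = a * cp_fun C P e \<sigma>"
  unfolding cp_fun_def by (induct P) (auto simp: algebra_simps)

lemma chi_virtual_concat: "chi_virtual C (concat Vs) e \<sigma> = (\<Sum>V\<leftarrow>Vs. chi_virtual C V e \<sigma>)"
  unfolding chi_virtual_def by (induct Vs) auto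

lemma chi_virtual_scale: "chi_virtual C (map (\<lambda>(b, c, n, \<rho>). (a * b, c, n, \<rho>)) V) e \<sigma> = a * chi_virtual C V e \<sigma>"
  unfolding chi_virtual_def by (induct V) (auto simp: algebra_simps)

lemma part1:
  assumes L: "free_module C L"
  shows "chi_free C L = cp_fun C (concat (map (\<lambda>(c, n, \<rho>). Pof c n \<rho>) L))"
proof (intro ext)
  fix e \<sigma>
  show "chi_free C L e \<sigma> = cp_fun C (concat (map (\<lambda>(c, n, \<rho>). Pof c n \<rho>) L)) e \<sigma>"
  proof (cases "e \<in> Obj C \<and> \<sigma> \<in> Aut C e")
    case True
    have "cp_fun C (concat (map (\<lambda>(c, n, \<rho>). Pof c n \<rho>) L)) e \<sigma>
        = (\<Sum>x\<leftarrow>L. cp_fun C (Pof (fst x) (fst (snd x)) (snd (snd x))) e \<sigma>)"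
      unfolding cp_fun_concat by (simp add: comp_def case_prod_beta)
    also have "\<dots> = (\<Sum>i<length L. cp_fun C (Pof (fst (L!i)) (fst (snd (L!i))) (snd (snd (L!i)))) e \<sigma>)"
      by (simp add: sum_list_sum_nth atLeast0LessThan)
    also have "\<dots> = chi_free C L e \<sigma>"
      unfolding chi_free_eq[OF L conjunct1[OF True] conjunct2[OF True]] using True by (simp add: Pof_fun)
    finally show ?thesis by simp
  qed (simp add: cp_fun_out chi_free_out)
qed

lemma part1_cp: "free_module C L \<Longrightarrow> char_poly C (concat (map (\<lambda>(c, n, \<rho>). Pof c n \<rho>) L))"
  unfolding free_module_def char_poly_def using Pof_cp unfolding char_poly_def by fastforce

end

context fic
begin

lemma chi_virtual_scale2: "chi_virtual C (map (\<lambda>(b, y). (a * b, y)) V) e \<sigma> = a * chi_virtual C V e \<sigma>"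
  unfolding chi_virtual_def by (induct V) (auto simp: algebra_simps)
lemma cp_fun_scale2: "cp_fun C (map (\<lambda>(b, y). (a * b, y)) P) e \<sigma> = a * cp_fun C P e \<sigma>"
  unfolding cp_fun_def by (induct P) (auto simp: algebra_simps)

lemma binom_virtual:
  assumes s: "s \<in> Aut C c"
  shows "\<exists>V. virtual_free C V \<and> (\<forall>x\<in>set V. fst (snd x) = c) \<and>
     (\<forall>e \<sigma>. chi_virtual C V e \<sigma> = (if e \<in> Obj C \<and> \<sigma> \<in> Aut C e then of_nat (binomX C c (cls c s) e \<sigma>) else 0))"
proof -
  have c: "c \<in> Obj C" using aut_obj s by blast
  obtain W :: "(complex \<times> nat \<times> ('m \<Rightarrow> nat \<Rightarrow> nat \<Rightarrow> complex)) list" where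
    W1: "\<forall>(a, n, \<rho>) \<in> set W. is_rep C c n \<rho>" and
    W2: "\<forall>g\<in>Aut C c. (\<Sum>(a, n, \<rho>) \<leftarrow> W. a * trc n \<rho> g) = (if g \<in> cls c s then 1 else 0)"
    using RTc[OF s] by blast
  define V where "V = map (\<lambda>(a, n, \<rho>). (a, c, n, \<rho>)) W"
  have vf: "virtual_free C V" unfolding V_def virtual_free_def using W1 c by auto
  have obj: "\<forall>x\<in>set V. fst (snd x) = c" unfolding V_def by auto
  have cv: "chi_virtual C V e \<sigma> = (\<Sum>x\<leftarrow>W. fst x * chi_free C [(c, fst (snd x), snd (snd x))] e \<sigma>)" for e \<sigma>
    unfolding chi_virtual_def V_def by (simp add: comp_def case_prod_beta)
  have main: "chi_virtual C V e \<sigma> = (if e \<in> Obj C \<and> \<sigma> \<in> Aut C e then of_nat (binomX C c (cls c s) e \<sigma>) else 0)" for e \<sigma>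
  proof (cases "e \<in> Obj C \<and> \<sigma> \<in> Aut C e")
    case False
    then show ?thesis unfolding cv using chi_free_out[OF False] by auto
  next
    case True
    then have e: "e \<in> Obj C" and \<sigma>: "\<sigma> \<in> Aut C e" by auto
    let ?F = "\<lambda>r. rp c (cmp C \<sigma> r) = r"
    let ?g = "\<lambda>r. gof c (cmp C \<sigma> r)"
    have gA: "?g r \<in> Aut C c" if "r \<in> Reps c e" for r
      using that gof(1)[OF scomp[OF \<sigma>]] unfolding Reps_def by auto
    have "chi_virtual C V e \<sigma> = (\<Sum>x\<leftarrow>W. fst x * (\<Sum>r\<in>Reps c e. if ?F r then trc (fst (snd x)) (snd (snd x)) (?g r) else 0))"
      unfolding cv
    proof (rule arg_cong[where f = sum_list], rule map_cong[OF refl])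
      fix x assume x: "x \<in> set W"
      have rep: "is_rep C c (fst (snd x)) (snd (snd x))" using W1 x by auto
      show "fst x * chi_free C [(c, fst (snd x), snd (snd x))] e \<sigma> =
           fst x * (\<Sum>r\<in>Reps c e. if ?F r then trc (fst (snd x)) (snd (snd x)) (?g r) else 0)"
        by (subst chi_single[OF c rep e \<sigma>]) (rule refl)
    qed
    also have "\<dots> = (\<Sum>r\<in>Reps c e. \<Sum>x\<leftarrow>W. fst x * (if ?F r then trc (fst (snd x)) (snd (snd x)) (?g r) else 0))"
      by (simp add: sum_distrib_left sum_list_sum_swap)
    also have "\<dots> = (\<Sum>r\<in>Reps c e. if ?F r \<and> ?g r \<in> cls c s then 1 else 0)"
    proof (intro sum.cong refl)
      fix r assume r: "r \<in> Reps c e"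
      show "(\<Sum>x\<leftarrow>W. fst x * (if ?F r then trc (fst (snd x)) (snd (snd x)) (?g r) else 0)) =
            (if ?F r \<and> ?g r \<in> cls c s then 1 else 0)"
      proof (cases "?F r")
        case True
        have "(\<Sum>x\<leftarrow>W. fst x * (if ?F r then trc (fst (snd x)) (snd (snd x)) (?g r) else 0))
            = (\<Sum>(a, n, \<rho>) \<leftarrow> W. a * trc n \<rho> (?g r))"
          using True by (simp add: split_def)
        then show ?thesis using W2 gA[OF r] True by simp
      qed simp
    qed
    also have "\<dots> = of_nat (card {r\<in>Reps c e. ?F r \<and> ?g r \<in> cls c s})"
      using fin_Reps by (simp add: sum.If_cases Int_def)
    also have "\<dots> = of_nat (binomX C c (cls c s) e \<sigma>)" using BX[OF s \<sigma>] by simp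
    finally show ?thesis using True by simp
  qed
  show ?thesis using vf obj main by blast
qed

definition VB where "VB c \<mu> = (SOME V. virtual_free C V \<and> (\<forall>x\<in>set V. fst (snd x) = c) \<and>
     (\<forall>e \<sigma>. chi_virtual C V e \<sigma> = (if e \<in> Obj C \<and> \<sigma> \<in> Aut C e then of_nat (binomX C c \<mu> e \<sigma>) else 0)))"

lemma VB: assumes "conj_class C c \<mu>"
  shows "virtual_free C (VB c \<mu>) \<and> (\<forall>x\<in>set (VB c \<mu>). fst (snd x) = c) \<and>
     (\<forall>e \<sigma>. chi_virtual C (VB c \<mu>) e \<sigma> = (if e \<in> Obj C \<and> \<sigma> \<in> Aut C e then of_nat (binomX C c \<mu> e \<sigma>) else 0))"
proof -
  obtain s where s: "s \<in> Aut C c" "\<mu> = cls c s" using assms unfolding conj_class_cls by blast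
  show ?thesis unfolding VB_def s(2) by (rule someI_ex[OF binom_virtual[OF s(1)]])
qed

definition VofP where "VofP P = concat (map (\<lambda>(a, c, \<mu>). map (\<lambda>(b, c', n, \<rho>). (a * b, c', n, \<rho>)) (VB c \<mu>)) P)"

lemma part2:
  assumes P: "char_poly C P"
  shows "virtual_free C (VofP P)" "\<And>d. cp_deg_le C P d \<Longrightarrow> vf_deg_le C (VofP P) d"
    "cp_fun C P = chi_virtual C (VofP P)"
proof -
  have cc: "conj_class C c \<mu>" if "(a, c, \<mu>) \<in> set P" for a c \<mu> using P that unfolding char_poly_def by auto
  show "virtual_free C (VofP P)"
    unfolding virtual_free_def VofP_def
  proof (clarsimp)
    fix a c \<mu> b c' n \<rho> assume m: "(a, c, \<mu>) \<in> set P" "(b, c', n, \<rho>) \<in> set (VB c \<mu>)"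
    then show "c' \<in> Obj C \<and> is_rep C c' n \<rho>" using VB[OF cc[OF m(1)]] unfolding virtual_free_def by auto
  qed
  show "vf_deg_le C (VofP P) d" if "cp_deg_le C P d" for d
    unfolding vf_deg_le_def VofP_def
  proof (clarsimp)
    fix a c \<mu> b c' n \<rho> assume m: "(a, c, \<mu>) \<in> set P" "(b, c', n, \<rho>) \<in> set (VB c \<mu>)"
    then have "c' = c" using VB[OF cc[OF m(1)]] by fastforce
    then show "obj_le C c' d" using that m(1) unfolding cp_deg_le_def by auto
  qed
  show "cp_fun C P = chi_virtual C (VofP P)"
  proof (intro ext)
    fix e \<sigma>
    have "chi_virtual C (VofP P) e \<sigma> = (\<Sum>x\<leftarrow>P. fst x * chi_virtual C (VB (fst (snd x)) (snd (snd x))) e \<sigma>)"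
      unfolding VofP_def chi_virtual_concat by (simp add: comp_def case_prod_beta chi_virtual_scale2)
    also have "\<dots> = (\<Sum>x\<leftarrow>P. fst x * (if e \<in> Obj C \<and> \<sigma> \<in> Aut C e then of_nat (binomX C (fst (snd x)) (snd (snd x)) e \<sigma>) else 0))"
    proof (rule arg_cong[where f = sum_list], rule map_cong[OF refl])
      fix x assume x: "x \<in> set P"
      have "conj_class C (fst (snd x)) (snd (snd x))" using cc[of "fst x" "fst (snd x)" "snd (snd x)"] x by simp
      then show "fst x * chi_virtual C (VB (fst (snd x)) (snd (snd x))) e \<sigma> =
          fst x * (if e \<in> Obj C \<and> \<sigma> \<in> Aut C e then of_nat (binomX C (fst (snd x)) (snd (snd x)) e \<sigma>) else 0)"
        using VB by simp
    qed
    also have "\<dots> = cp_fun C P e \<sigma>"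
      unfolding cp_fun_def by (cases "e \<in> Obj C \<and> \<sigma> \<in> Aut C e") (auto simp: split_def)
    finally show "cp_fun C P e \<sigma> = chi_virtual C (VofP P) e \<sigma>" by simp
  qed
qed

definition PofV where "PofV V = concat (map (\<lambda>(a, c, n, \<rho>). map (\<lambda>(b, c', \<mu>). (a * b, c', \<mu>)) (Pof c n \<rho>)) V)"

lemma part3b:
  assumes V: "virtual_free C V"
  shows "char_poly C (PofV V)" "\<And>d. vf_deg_le C V d \<Longrightarrow> cp_deg_le C (PofV V) d"
    "cp_fun C (PofV V) = chi_virtual C V"
proof -
  have vi: "c \<in> Obj C \<and> is_rep C c n \<rho>" if "(a, c, n, \<rho>) \<in> set V" for a c n \<rho>
    using V that unfolding virtual_free_def by auto
  show "char_poly C (PofV V)"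
    unfolding char_poly_def PofV_def
  proof (clarsimp)
    fix a c n \<rho> b c' \<mu> assume m: "(a, c, n, \<rho>) \<in> set V" "(b, c', \<mu>) \<in> set (Pof c n \<rho>)"
    then show "c' \<in> Obj C \<and> conj_class C c' \<mu>" using Pof_cp[of c n \<rho>] vi[OF m(1)] unfolding char_poly_def by auto
  qed
  show "cp_deg_le C (PofV V) d" if "vf_deg_le C V d" for d
    unfolding cp_deg_le_def PofV_def
  proof (clarsimp)
    fix a c n \<rho> b c' \<mu> assume m: "(a, c, n, \<rho>) \<in> set V" "(b, c', \<mu>) \<in> set (Pof c n \<rho>)"
    then have "c' = c" unfolding Pof_def by auto
    then show "obj_le C c' d" using that m(1) unfolding vf_deg_le_def by auto
  qed
  show "cp_fun C (PofV V) = chi_virtual C V"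
  proof (intro ext)
    fix e \<sigma>
    have "cp_fun C (PofV V) e \<sigma> = (\<Sum>x\<leftarrow>V. fst x * cp_fun C (Pof (fst (snd x)) (fst (snd (snd x))) (snd (snd (snd x)))) e \<sigma>)"
      unfolding PofV_def cp_fun_concat by (simp add: comp_def case_prod_beta cp_fun_scale2)
    also have "\<dots> = (\<Sum>x\<leftarrow>V. fst x * chi_free C [(fst (snd x), fst (snd (snd x)), snd (snd (snd x)))] e \<sigma>)"
    proof (rule arg_cong[where f = sum_list], rule map_cong[OF refl])
      fix x assume x: "x \<in> set V"
      obtain a c n \<rho> where x0: "x = (a, c, n, \<rho>)" by (metis prod_cases4)
      have "free_module C [(c, n, \<rho>)]" using vi x x0 unfolding free_module_def by auto
      from part1[OF this] have "chi_free C [(c, n, \<rho>)] = cp_fun C (Pof c n \<rho>)" by simp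
      then show "fst x * cp_fun C (Pof (fst (snd x)) (fst (snd (snd x))) (snd (snd (snd x)))) e \<sigma> =
          fst x * chi_free C [(fst (snd x), fst (snd (snd x)), snd (snd (snd x)))] e \<sigma>"
        using x0 by simp
    qed
    also have "\<dots> = chi_virtual C V e \<sigma>" unfolding chi_virtual_def by (simp add: split_def)
    finally show "cp_fun C (PofV V) e \<sigma> = chi_virtual C V e \<sigma>" .
  qed
qed

end


theorem theoremA:
  fixes C :: "('o, 'm) cat"
  assumes "FI_type C"
  shows "(\<forall>L. free_module C L \<longrightarrow> (\<exists>P. char_poly C P \<and> chi_free C L = cp_fun C P))
       \<and> (\<forall>P. char_poly C P \<longrightarrow>
            (\<exists>V. virtual_free C V \<and> cp_fun C P = chi_virtual C V))
       \<and> (\<forall>d\<in>Obj C.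
            {cp_fun C P | P. char_poly C P \<and> cp_deg_le C P d}
          = {chi_virtual C V | V. virtual_free C V \<and> vf_deg_le C V d})"
proof -
  interpret fic C using assms by unfold_locales
  have A: "\<forall>L. free_module C L \<longrightarrow> (\<exists>P. char_poly C P \<and> chi_free C L = cp_fun C P)"
    using part1 part1_cp by blast
  have B: "\<forall>P. char_poly C P \<longrightarrow> (\<exists>V. virtual_free C V \<and> cp_fun C P = chi_virtual C V)"
    using part2 by blast
  have D: "{cp_fun C P | P. char_poly C P \<and> cp_deg_le C P d}
          = {chi_virtual C V | V. virtual_free C V \<and> vf_deg_le C V d}" for d
  proof (rule Set.set_eqI, rule iffI)
    fix x assume "x \<in> {cp_fun C P | P. char_poly C P \<and> cp_deg_le C P d}"
    then obtain P where P: "char_poly C P" "cp_deg_le C P d" "x = cp_fun C P" by blast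
    then show "x \<in> {chi_virtual C V | V. virtual_free C V \<and> vf_deg_le C V d}"
      using part2[OF P(1)] by blast
  next
    fix x assume "x \<in> {chi_virtual C V | V. virtual_free C V \<and> vf_deg_le C V d}"
    then obtain V where V: "virtual_free C V" "vf_deg_le C V d" "x = chi_virtual C V" by blast
    have "char_poly C (PofV V)" "cp_deg_le C (PofV V) d" "cp_fun C (PofV V) = chi_virtual C V"
      using part3b[OF V(1)] V(2) by auto
    then have "x = cp_fun C (PofV V) \<and> char_poly C (PofV V) \<and> cp_deg_le C (PofV V) d"
      using V(3) by simp
    then show "x \<in> {cp_fun C P | P. char_poly C P \<and> cp_deg_le C P d}"
      unfolding mem_Collect_eq by (rule exI)
  qed
  show ?thesis using A B D by blast
qed

end
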